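(* Under the setting and with the quantities $\boldsymbol{\Psi}_{i,j}$, $\mathbf{D}_i$ defined in the context, run the following procedure on block arrays $\mathbf{N}_{j,k}$, $\mathbf{P}_{j,k}$ indexed by related pairs $(j,k)$ (i.e. $j=k$, $j\in P_k$, or $k\in P_j$): (1) Initialize $\mathbf{N}_{j,k}=\boldsymbol{\Sigma}^<_{j,j}\big((\mathbf{A}^{-1})_{k,j}\big)^\dagger$ for every related pair $(j,k)$. (2) For $l=1,\dots,\lambda-1$ in increasing order, for every cluster $i$ with $\ell(i)=l$, and for all $j,k\in P_i$: replace $\mathbf{N}_{j,k}$ by $\mathbf{N}_{j,k}+\boldsymbol{\Psi}_{i,j}^T\mathbf{N}_{i,k}$. (3) Set $\mathbf{P}_{j,k}=\mathbf{D}_j^{-1}\mathbf{N}_{j,k}$ for every related pair $(j,k)$. (4) For $l=\lambda-1,\dots,1$ in decreasing order, for every cluster $i$ with $\ell(i)=l$: first, for every $j\in P_i$ replace $\mathbf{P}_{i,j}$ by $\mathbf{P}_{i,j}+\sum_{k\in P_i}\boldsymbol{\Psi}_{i,k}\mathbf{P}_{k,j}$; then set $\mathbf{P}_{j,i}=-(\mathbf{P}_{i,j})^\dagger$ for every $j\in P_i$; then replace $\mathbf{P}_{i,i}$ by $\mathbf{P}_{i,i}+\sum_{j\in P_i}\boldsymbol{\Psi}_{i,j}\mathbf{P}_{j,i}$. Then at termination, for every cluster $i$ and every $j\in P_i\cup\{i\}$, $\mathbf{P}_{i,j}=\mathbf{G}^<_{i,j}$ and $\mathbf{P}_{j,i}=\mathbf{G}^<_{j,i}$,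 where $\mathbf{G}^<=\mathbf{A}^{-1}\boldsymbol{\Sigma}^<(\mathbf{A}^{-1})^\dagger$. In particular all diagonal blocks $\mathbf{G}^<_{i,i}$ are obtained.
   Context: Let $\mathbf{A}\in\mathbb{C}^{n\times n}$ be invertible and complex symmetric ($\mathbf{A}^T=\mathbf{A}$; ${}^T$ is the non-conjugated transpose, $\dagger$ the conjugate transpose). The index set is partitioned into clusters $1,\dots,M$ organized as a rooted tree (as produced by nested dissection: each separator is the parent of the clusters it separates). For a cluster $i$, $P_i$ denotes the set of its ancestors in the tree. Blocks are written $\mathbf{A}_{i,j}$. Assume $\mathbf{A}_{i,j}=\mathbf{0}$ unless $i=j$, $i\in P_j$ or $j\in P_i$. Each cluster $i$ has a level $\ell(i)\in\{1,\dots,\lambda\}$ with $\ell(j)>\ell(i)$ whenever $j\in P_i$; the root is the only cluster of level $\lambda$. Folding: set $\mathbf{A}^{(0)}=\mathbf{A}$. For $l=1,\dots,\lambda-1$: set $\mathbf{A}^{(l)}=\mathbf{A}^{(l-1)}$, and for each cluster $i$ with $\ell(i)=l$: define $\boldsymbol{\Psi}_{i,j}=-(\mathbf{A}^{(l)}_{i,i})^{-1}\mathbf{A}^{(l)}_{i,j}$ for $j\in P_i$; replace $\mathbf{A}^{(l)}_{j,k}$ by $\mathbf{A}^{(l)}_{j,k}+\boldsymbol{\Psi}_{i,j}^T\mathbf{A}^{(l)}_{i,k}$ for all $j,k\in P_i$; and set $\mathbf{A}^{(l)}_{i,j}=\mathbf{A}^{(l)}_{j,i}=\mathbf{0}$ for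 $j\in P_i$. It is assumed that every block $\mathbf{A}^{(l)}_{i,i}$ inverted here is invertible and that the final diagonal blocks are invertible. Let $\mathbf{D}_i$ denote the $(i,i)$ diagonal block of $\mathbf{A}^{(\lambda-1)}$ (which is block diagonal). $\boldsymbol{\Sigma}^<$ is block diagonal with respect to the clusters (diagonal blocks $\boldsymbol{\Sigma}^<_{i,i}$) and skew-Hermitian: $(\boldsymbol{\Sigma}^<)^\dagger=-\boldsymbol{\Sigma}^<$. $(\mathbf{A}^{-1})_{k,j}$ and $\mathbf{G}^<_{i,j}$ denote cluster blocks of the respective matrices. *)

theory Defs
  imports "Jordan_Normal_Form.DL_Submatrix" "Jordan_Normal_Form.Schur_Decomposition"
begin

type_synonym blocks = "nat \<Rightarrow> nat \<Rightarrow> complex mat"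

definition minv :: "complex mat \<Rightarrow> complex mat" where
  "minv X = (SOME Y. Y \<in> carrier_mat (dim_row X) (dim_row X) \<and> inverts_mat X Y \<and> inverts_mat Y X)"

definition cluster :: "(nat \<Rightarrow> nat) \<Rightarrow> nat \<Rightarrow> nat \<Rightarrow> nat set" where
  "cluster cl n i = {k. k < n \<and> cl k = i}"

definition blk :: "(nat \<Rightarrow> nat) \<Rightarrow> nat \<Rightarrow> complex mat \<Rightarrow> nat \<Rightarrow> nat \<Rightarrow> complex mat" where
  "blk cl n X i j = submatrix X (cluster cl n i) (cluster cl n j)"

definition ancestors :: "(nat \<Rightarrow> nat) \<Rightarrow> nat \<Rightarrow> nat \<Rightarrow> nat \<Rightarrow> nat set" where
  "ancestors par r M i = {j. (i, j) \<in> {(a, par a) | a. a \<in> {1..M} \<and> a \<noteq> r}\<^sup>+}"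

definition related :: "(nat \<Rightarrow> nat set) \<Rightarrow> nat \<Rightarrow> nat \<Rightarrow> bool" where
  "related Pa j k \<longleftrightarrow> j = k \<or> j \<in> Pa k \<or> k \<in> Pa j"

definition fwd_order :: "(nat \<Rightarrow> nat) \<Rightarrow> nat \<Rightarrow> nat \<Rightarrow> nat list" where
  "fwd_order lev lam M = concat (map (\<lambda>l. filter (\<lambda>i. lev i = l) [1..<Suc M]) [1..<lam])"

definition bwd_order :: "(nat \<Rightarrow> nat) \<Rightarrow> nat \<Rightarrow> nat \<Rightarrow> nat list" where
  "bwd_order lev lam M = concat (map (\<lambda>l. filter (\<lambda>i. lev i = l) [1..<Suc M]) (rev [1..<lam]))"

definition fold_step :: "(nat \<Rightarrow> nat set) \<Rightarrow> nat \<Rightarrow> blocks \<Rightarrow> blocks" where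
  "fold_step Pa i B = (\<lambda>j k.
     if j \<in> Pa i \<and> k \<in> Pa i then B j k + transpose_mat (- minv (B i i) * B i j) * B i k
     else if (j = i \<and> k \<in> Pa i) \<or> (k = i \<and> j \<in> Pa i) then 0\<^sub>m (dim_row (B j k)) (dim_col (B j k))
     else B j k)"

definition folding :: "(nat \<Rightarrow> nat set) \<Rightarrow> blocks \<Rightarrow> nat list \<Rightarrow> blocks" where
  "folding Pa B0 xs = foldl (\<lambda>B i. fold_step Pa i B) B0 xs"

text \<open>State A^(l) just before cluster i is processed.\<close>
definition state_before :: "(nat \<Rightarrow> nat set) \<Rightarrow> blocks \<Rightarrow> nat list \<Rightarrow> nat \<Rightarrow> blocks" where
  "state_before Pa B0 ord i = folding Pa B0 (takeWhile (\<lambda>x. x \<noteq> i) ord)"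

definition Psi :: "(nat \<Rightarrow> nat set) \<Rightarrow> blocks \<Rightarrow> nat list \<Rightarrow> nat \<Rightarrow> nat \<Rightarrow> complex mat" where
  "Psi Pa B0 ord i j = - minv (state_before Pa B0 ord i i i) * state_before Pa B0 ord i i j"

definition Dblk :: "(nat \<Rightarrow> nat set) \<Rightarrow> blocks \<Rightarrow> nat list \<Rightarrow> nat \<Rightarrow> complex mat" where
  "Dblk Pa B0 ord i = folding Pa B0 ord i i"

definition N_init :: "(nat \<Rightarrow> nat set) \<Rightarrow> (nat \<Rightarrow> nat \<Rightarrow> complex mat) \<Rightarrow> (nat \<Rightarrow> nat \<Rightarrow> complex mat) \<Rightarrow> blocks" where
  "N_init Pa SigB AinvB = (\<lambda>j k. if related Pa j k then SigB j j * mat_adjoint (AinvB k j) else 0\<^sub>m 0 0)"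

definition N_step :: "(nat \<Rightarrow> nat set) \<Rightarrow> (nat \<Rightarrow> complex mat) \<Rightarrow> nat \<Rightarrow> blocks \<Rightarrow> blocks" where
  "N_step Pa Ps i N = (\<lambda>j k. if j \<in> Pa i \<and> k \<in> Pa i then N j k + transpose_mat (Ps j) * N i k else N j k)"

definition P_init :: "(nat \<Rightarrow> nat set) \<Rightarrow> (nat \<Rightarrow> complex mat) \<Rightarrow> blocks \<Rightarrow> blocks" where
  "P_init Pa D N = (\<lambda>j k. if related Pa j k then minv (D j) * N j k else 0\<^sub>m 0 0)"

text \<open>Step (4): the three sub-steps for cluster i; Ps k = Psi_{i,k}.\<close>
definition P_step :: "(nat \<Rightarrow> nat set) \<Rightarrow> (nat \<Rightarrow> complex mat) \<Rightarrow> nat \<Rightarrow> blocks \<Rightarrow> blocks" where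
  "P_step Pa Ps i P =
    (let anc = sorted_list_of_set (Pa i);
         P1 = (\<lambda>a b. if a = i \<and> b \<in> Pa i
                      then foldl (\<lambda>acc k. acc + Ps k * P k b) (P i b) anc else P a b);
         P2 = (\<lambda>a b. if b = i \<and> a \<in> Pa i then - mat_adjoint (P1 i a) else P1 a b);
         P3 = (\<lambda>a b. if a = i \<and> b = i
                      then foldl (\<lambda>acc j. acc + Ps j * P2 j i) (P2 i i) anc else P2 a b)
     in P3)"

definition selinv :: "(nat \<Rightarrow> nat) \<Rightarrow> nat \<Rightarrow> (nat \<Rightarrow> nat) \<Rightarrow> nat \<Rightarrow> nat \<Rightarrow> (nat \<Rightarrow> nat) \<Rightarrow> nat
    \<Rightarrow> complex mat \<Rightarrow> complex mat \<Rightarrow> blocks" where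
  "selinv cl n par r M lev lam A Sig =
    (let Pa = ancestors par r M;
         B0 = blk cl n A;
         ford = fwd_order lev lam M;
         Ps = Psi Pa B0 ford;
         N = foldl (\<lambda>N i. N_step Pa (Ps i) i N) (N_init Pa (blk cl n Sig) (blk cl n (minv A))) ford;
         P0 = P_init Pa (Dblk Pa B0 ford) N
     in foldl (\<lambda>P i. P_step Pa (Ps i) i P) P0 (bwd_order lev lam M))"

end

theory Submission
  imports Defs
begin

lemma adj_dim[simp]: "dim_row (mat_adjoint A) = dim_col A" "dim_col (mat_adjoint A) = dim_row A"
  unfolding mat_adjoint_def by auto

lemma adj_index[simp]: "i < dim_col A \<Longrightarrow> j < dim_row A \<Longrightarrow> mat_adjoint A $$ (i,j) = cnj (A $$ (j,i))"
  unfolding mat_adjoint_def by (simp add: mat_of_rows_index)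

lemma adj_carrier: "A \<in> carrier_mat r c \<Longrightarrow> mat_adjoint A \<in> carrier_mat c r"
  by auto

definition msum :: "nat \<Rightarrow> nat \<Rightarrow> 'b set \<Rightarrow> ('b \<Rightarrow> complex mat) \<Rightarrow> complex mat" where
  "msum r c U f = mat r c (\<lambda>(p,q). \<Sum>b\<in>U. f b $$ (p,q))"

lemma msum_carrier[simp]: "msum r c U f \<in> carrier_mat r c"
  unfolding msum_def by auto
lemma msum_dim[simp]: "dim_row (msum r c U f) = r" "dim_col (msum r c U f) = c"
  unfolding msum_def by auto
lemma msum_index: "p < r \<Longrightarrow> q < c \<Longrightarrow> msum r c U f $$ (p,q) = (\<Sum>b\<in>U. f b $$ (p,q))"
  unfolding msum_def by auto

lemma msum_mult_left:
  assumes X: "X \<in> carrier_mat r m" and f: "\<And>b. b \<in> U \<Longrightarrow> f b \<in> carrier_mat m c"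
  shows "X * msum m c U f = msum r c U (\<lambda>b. X * f b)"
proof (rule eq_matI)
  fix p q assume pq: "p < dim_row (msum r c U (\<lambda>b. X * f b))" "q < dim_col (msum r c U (\<lambda>b. X * f b))"
  hence p: "p < r" and q: "q < c" by auto
  have "(X * msum m c U f) $$ (p,q) = (\<Sum>s<m. X $$ (p,s) * (\<Sum>b\<in>U. f b $$ (s,q)))"
    using X p q by (simp add: scalar_prod_def msum_index lessThan_atLeast0)
  also have "\<dots> = (\<Sum>b\<in>U. \<Sum>s<m. X $$ (p,s) * f b $$ (s,q))"
    by (simp add: sum_distrib_left sum.swap[of _ U])
  also have "\<dots> = (\<Sum>b\<in>U. (X * f b) $$ (p,q))"
  proof (rule sum.cong)
    fix b assume "b \<in> U" with f have "f b \<in> carrier_mat m c" by auto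
    then show "(\<Sum>s<m. X $$ (p,s) * f b $$ (s,q)) = (X * f b) $$ (p,q)"
      using X p q by (simp add: scalar_prod_def lessThan_atLeast0)
  qed simp
  also have "\<dots> = msum r c U (\<lambda>b. X * f b) $$ (p,q)"
    using p q by (simp add: msum_index)
  finally show "(X * msum m c U f) $$ (p,q) = msum r c U (\<lambda>b. X * f b) $$ (p,q)" .
qed (use X in auto)

lemma msum_mult_right:
  assumes Y: "Y \<in> carrier_mat m c" and f: "\<And>b. b \<in> U \<Longrightarrow> f b \<in> carrier_mat r m"
  shows "msum r m U f * Y = msum r c U (\<lambda>b. f b * Y)"
proof (rule eq_matI)
  fix p q assume pq: "p < dim_row (msum r c U (\<lambda>b. f b * Y))" "q < dim_col (msum r c U (\<lambda>b. f b * Y))"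
  hence p: "p < r" and q: "q < c" by auto
  have "(msum r m U f * Y) $$ (p,q) = (\<Sum>s<m. (\<Sum>b\<in>U. f b $$ (p,s)) * Y $$ (s,q))"
    using Y p q by (simp add: scalar_prod_def msum_index lessThan_atLeast0)
  also have "\<dots> = (\<Sum>b\<in>U. \<Sum>s<m. f b $$ (p,s) * Y $$ (s,q))"
    by (simp add: sum_distrib_right sum.swap[of _ U])
  also have "\<dots> = (\<Sum>b\<in>U. (f b * Y) $$ (p,q))"
  proof (rule sum.cong)
    fix b assume "b \<in> U" with f have "f b \<in> carrier_mat r m" by auto
    then show "(\<Sum>s<m. f b $$ (p,s) * Y $$ (s,q)) = (f b * Y) $$ (p,q)"
      using Y p q by (simp add: scalar_prod_def lessThan_atLeast0)
  qed simp
  also have "\<dots> = msum r c U (\<lambda>b. f b * Y) $$ (p,q)"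
    using p q by (simp add: msum_index)
  finally show "(msum r m U f * Y) $$ (p,q) = msum r c U (\<lambda>b. f b * Y) $$ (p,q)" .
qed (use Y in auto)

lemma msum_insert:
  assumes "finite U" "a \<notin> U" "f a \<in> carrier_mat r c"
  shows "msum r c (insert a U) f = f a + msum r c U f"
  by (rule eq_matI) (use assms in \<open>auto simp: msum_index\<close>)

lemma msum_empty: "msum r c {} f = 0\<^sub>m r c"
  by (rule eq_matI) (auto simp: msum_index)

lemma msum_single: "f a \<in> carrier_mat r c \<Longrightarrow> msum r c {a} f = f a"
  by (rule eq_matI) (auto simp: msum_index)

lemma msum_add:
  assumes "\<And>b. b \<in> U \<Longrightarrow> f b \<in> carrier_mat r c" "\<And>b. b \<in> U \<Longrightarrow> g b \<in> carrier_mat r c"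
  shows "msum r c U (\<lambda>b. f b + g b) = msum r c U f + msum r c U g"
proof (rule eq_matI)
  fix p q assume pq: "p < dim_row (msum r c U f + msum r c U g)" "q < dim_col (msum r c U f + msum r c U g)"
  hence p: "p < r" and q: "q < c" by auto
  have "(\<Sum>b\<in>U. (f b + g b) $$ (p,q)) = (\<Sum>b\<in>U. f b $$ (p,q) + g b $$ (p,q))"
  proof (rule sum.cong)
    fix b assume "b \<in> U" with assms have "f b \<in> carrier_mat r c" "g b \<in> carrier_mat r c" by auto
    then show "(f b + g b) $$ (p,q) = f b $$ (p,q) + g b $$ (p,q)" using p q by simp
  qed simp
  then show "msum r c U (\<lambda>b. f b + g b) $$ (p,q) = (msum r c U f + msum r c U g) $$ (p,q)"
    using p q by (simp add: msum_index sum.distrib)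
qed auto

lemma msum_uminus:
  assumes "\<And>b. b \<in> U \<Longrightarrow> f b \<in> carrier_mat r c"
  shows "msum r c U (\<lambda>b. - f b) = - msum r c U f"
proof (rule eq_matI)
  fix p q assume pq: "p < dim_row (- msum r c U f)" "q < dim_col (- msum r c U f)"
  hence p: "p < r" and q: "q < c" by auto
  have "(\<Sum>b\<in>U. (- f b) $$ (p,q)) = (\<Sum>b\<in>U. - (f b $$ (p,q)))"
  proof (rule sum.cong)
    fix b assume "b \<in> U" with assms have "f b \<in> carrier_mat r c" by auto
    then show "(- f b) $$ (p,q) = - (f b $$ (p,q))" using p q by simp
  qed simp
  then show "msum r c U (\<lambda>b. - f b) $$ (p,q) = (- msum r c U f) $$ (p,q)"
    using p q by (simp add: msum_index sum_negf)
qed auto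

lemma msum_cong:
  assumes "\<And>b. b \<in> U \<Longrightarrow> f b = g b"
  shows "msum r c U f = msum r c U g"
proof -
  have "(\<lambda>(p,q). \<Sum>b\<in>U. f b $$ (p,q)) = (\<lambda>(p,q). \<Sum>b\<in>U. g b $$ (p,q))"
    using assms by (auto intro!: ext sum.cong)
  then show ?thesis unfolding msum_def by simp
qed

lemma msum_mono_neutral:
  assumes "finite U" "V \<subseteq> U" "\<And>b. b \<in> U - V \<Longrightarrow> f b = 0\<^sub>m r c"
  shows "msum r c U f = msum r c V f"
  by (rule eq_matI) (use assms in \<open>auto simp: msum_index intro!: sum.mono_neutral_right\<close>)

lemma foldl_msum:
  assumes "distinct xs" "x0 \<in> carrier_mat r c" "\<And>k. k \<in> set xs \<Longrightarrow> g k \<in> carrier_mat r c"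
  shows "foldl (\<lambda>acc k. acc + g k) x0 xs = x0 + msum r c (set xs) g"
  using assms
proof (induction xs arbitrary: x0)
  case Nil
  then show ?case by (simp add: msum_empty)
next
  case (Cons x xs)
  have "foldl (\<lambda>acc k. acc + g k) x0 (x # xs) = foldl (\<lambda>acc k. acc + g k) (x0 + g x) xs" by simp
  also have "\<dots> = (x0 + g x) + msum r c (set xs) g"
    using Cons by auto
  also have "\<dots> = x0 + (g x + msum r c (set xs) g)"
    using Cons by (auto intro!: assoc_add_mat)
  also have "\<dots> = x0 + msum r c (set (x # xs)) g"
    using Cons by (simp add: msum_insert)
  finally show ?case .
qed


lemma cluster_sub: "cluster cl n i \<subseteq> {..<n}" unfolding cluster_def by auto
lemma cluster_finite[simp]: "finite (cluster cl n i)" unfolding cluster_def by auto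
lemma cluster_set: "{k. k < n \<and> k \<in> cluster cl n a} = cluster cl n a" unfolding cluster_def by auto

lemma blk_carrier: "X \<in> carrier_mat n n \<Longrightarrow>
   blk cl n X a b \<in> carrier_mat (card (cluster cl n a)) (card (cluster cl n b))"
  unfolding blk_def carrier_mat_def by (simp add: dim_submatrix cluster_set)

lemma blk_index: "X \<in> carrier_mat n n \<Longrightarrow> p < card (cluster cl n a) \<Longrightarrow> q < card (cluster cl n b) \<Longrightarrow>
   blk cl n X a b $$ (p,q) = X $$ (pick (cluster cl n a) p, pick (cluster cl n b) q)"
  unfolding blk_def by (rule submatrix_index) (simp_all add: cluster_set)

lemma pick_bij: assumes "finite S" shows "bij_betw (pick S) {..<card S} S"
  unfolding bij_betw_def
proof
  show "inj_on (pick S) {..<card S}"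
  proof (rule inj_onI)
    fix x y assume "x \<in> {..<card S}" "y \<in> {..<card S}" "pick S x = pick S y"
    then have xl: "x < card S" and yl: "y < card S" and e: "pick S x = pick S y" by auto
    have "x = card {a\<in>S. a < pick S x}" by (rule card_pick_le[OF xl, symmetric])
    also have "\<dots> = card {a\<in>S. a < pick S y}" by (simp only: e)
    also have "\<dots> = y" by (rule card_pick_le[OF yl])
    finally show "x = y" .
  qed
  show "pick S ` {..<card S} = S"
  proof
    show "pick S ` {..<card S} \<subseteq> S"
    proof
      fix x assume "x \<in> pick S ` {..<card S}"
      then obtain m where "m < card S" "x = pick S m" by auto
      then show "x \<in> S" using pick_in_set_le[of m S] by simp
    qed
    show "S \<subseteq> pick S ` {..<card S}"
    proof
      fix s assume s: "s \<in> S"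
      have "{a\<in>S. a < s} \<subset> S" using s by auto
      then have "card {a\<in>S. a < s} < card S" using assms by (simp add: psubset_card_mono)
      then have "card {a\<in>S. a < s} \<in> {..<card S}" by simp
      moreover have "s = pick S (card {a\<in>S. a < s})" by (rule pick_card_in_set[OF s, symmetric])
      ultimately show "s \<in> pick S ` {..<card S}" by (rule rev_image_eqI)
    qed
  qed
qed

lemma pick_lt: "p < card (cluster cl n a) \<Longrightarrow> pick (cluster cl n a) p < n"
proof -
  assume "p < card (cluster cl n a)"
  then have "pick (cluster cl n a) p \<in> cluster cl n a" by (rule pick_in_set_le)
  then show ?thesis using cluster_sub[of cl n a] by (simp add: subset_iff)
qed

lemma blk_mult:
  assumes X: "X \<in> carrier_mat n n" and Y: "Y \<in> carrier_mat n n"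
    and cl: "\<forall>k<n. cl k \<in> C" and C: "finite C"
  shows "blk cl n (X * Y) a b = msum (card (cluster cl n a)) (card (cluster cl n b)) C
            (\<lambda>c. blk cl n X a c * blk cl n Y c b)"
proof (rule eq_matI)
  let ?d = "\<lambda>a. card (cluster cl n a)"
  have XY: "X * Y \<in> carrier_mat n n" using X Y by auto
  fix p q assume "p < dim_row (msum (?d a) (?d b) C (\<lambda>c. blk cl n X a c * blk cl n Y c b))"
    "q < dim_col (msum (?d a) (?d b) C (\<lambda>c. blk cl n X a c * blk cl n Y c b))"
  hence p: "p < ?d a" and q: "q < ?d b" by auto
  define pa where "pa = pick (cluster cl n a) p"
  define pb where "pb = pick (cluster cl n b) q"
  have pa: "pa < n" and pb: "pb < n" using pick_lt p q unfolding pa_def pb_def by auto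
  have "blk cl n (X * Y) a b $$ (p,q) = (\<Sum>t<n. X $$ (pa,t) * Y $$ (t,pb))"
    unfolding blk_index[OF XY p q] pa_def[symmetric] pb_def[symmetric] using X Y pa pb by (simp add: scalar_prod_def lessThan_atLeast0)
  also have "\<dots> = (\<Sum>c\<in>C. \<Sum>t\<in>cluster cl n c. X $$ (pa,t) * Y $$ (t,pb))"
  proof -
    have e: "\<And>c. cluster cl n c = {x \<in> {..<n}. cl x = c}" unfolding cluster_def by auto
    show ?thesis unfolding e by (rule sum.group[symmetric]) (use cl C in auto)
  qed
  also have "\<dots> = (\<Sum>c\<in>C. \<Sum>s<?d c. X $$ (pa,pick (cluster cl n c) s) * Y $$ (pick (cluster cl n c) s,pb))"
    by (rule sum.cong[OF refl], rule sum.reindex_bij_betw[symmetric], rule pick_bij, simp)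
  also have "\<dots> = (\<Sum>c\<in>C. (blk cl n X a c * blk cl n Y c b) $$ (p,q))"
  proof (rule sum.cong[OF refl])
    fix c assume c: "c \<in> C"
    have c1: "blk cl n X a c \<in> carrier_mat (?d a) (?d c)" by (rule blk_carrier[OF X])
    have c2: "blk cl n Y c b \<in> carrier_mat (?d c) (?d b)" by (rule blk_carrier[OF Y])
    have "(blk cl n X a c * blk cl n Y c b) $$ (p,q) = (\<Sum>s<?d c. blk cl n X a c $$ (p,s) * blk cl n Y c b $$ (s,q))"
      using c1 c2 p q by (simp add: scalar_prod_def lessThan_atLeast0)
    also have "\<dots> = (\<Sum>s<?d c. X $$ (pa,pick (cluster cl n c) s) * Y $$ (pick (cluster cl n c) s,pb))"
    proof (rule sum.cong[OF refl])
      fix s assume "s \<in> {..<?d c}" then have s: "s < ?d c" by simp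
      show "blk cl n X a c $$ (p,s) * blk cl n Y c b $$ (s,q) = X $$ (pa,pick (cluster cl n c) s) * Y $$ (pick (cluster cl n c) s,pb)"
        unfolding blk_index[OF X p s] blk_index[OF Y s q] pa_def pb_def ..
    qed
    finally show "(\<Sum>s<?d c. X $$ (pa,pick (cluster cl n c) s) * Y $$ (pick (cluster cl n c) s,pb)) =
          (blk cl n X a c * blk cl n Y c b) $$ (p,q)" by simp
  qed
  finally show "blk cl n (X * Y) a b $$ (p,q) = msum (?d a) (?d b) C (\<lambda>c. blk cl n X a c * blk cl n Y c b) $$ (p,q)"
    using p q by (simp add: msum_index)
next
  show "dim_row (blk cl n (X * Y) a b) = dim_row (msum (card (cluster cl n a)) (card (cluster cl n b)) C (\<lambda>c. blk cl n X a c * blk cl n Y c b))"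
    using blk_carrier[of "X * Y" n cl a b] X Y by simp
  show "dim_col (blk cl n (X * Y) a b) = dim_col (msum (card (cluster cl n a)) (card (cluster cl n b)) C (\<lambda>c. blk cl n X a c * blk cl n Y c b))"
    using blk_carrier[of "X * Y" n cl a b] X Y by simp
qed


lemma blk_adjoint: assumes X: "X \<in> carrier_mat n n"
  shows "blk cl n (mat_adjoint X) a b = mat_adjoint (blk cl n X b a)"
proof -
  have X': "mat_adjoint X \<in> carrier_mat n n" using X by auto
  note c1 = blk_carrier[OF X, of cl b a] and c2 = blk_carrier[OF X', of cl a b]
  show ?thesis
  proof (rule eq_matI)
    fix i j assume "i < dim_row (mat_adjoint (blk cl n X b a))" "j < dim_col (mat_adjoint (blk cl n X b a))"
    then have i: "i < card (cluster cl n a)" and j: "j < card (cluster cl n b)" using c1 by auto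
    have "blk cl n (mat_adjoint X) a b $$ (i,j) = mat_adjoint X $$ (pick (cluster cl n a) i, pick (cluster cl n b) j)"
      by (rule blk_index[OF X' i j])
    also have "\<dots> = cnj (X $$ (pick (cluster cl n b) j, pick (cluster cl n a) i))"
      using X pick_lt[OF i] pick_lt[OF j] by simp
    also have "\<dots> = mat_adjoint (blk cl n X b a) $$ (i,j)"
      using c1 i j by (simp add: blk_index[OF X j i])
    finally show "blk cl n (mat_adjoint X) a b $$ (i,j) = mat_adjoint (blk cl n X b a) $$ (i,j)" .
  qed (use c1 c2 in auto)
qed

lemma blk_uminus: assumes X: "X \<in> carrier_mat n n"
  shows "blk cl n (- X) a b = - blk cl n X a b"
proof -
  have X': "- X \<in> carrier_mat n n" using X by auto
  note c1 = blk_carrier[OF X, of cl a b] and c2 = blk_carrier[OF X', of cl a b]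
  show ?thesis
  proof (rule eq_matI)
    fix i j assume "i < dim_row (- blk cl n X a b)" "j < dim_col (- blk cl n X a b)"
    then have i: "i < card (cluster cl n a)" and j: "j < card (cluster cl n b)" using c1 by auto
    show "blk cl n (- X) a b $$ (i,j) = (- blk cl n X a b) $$ (i,j)"
      using X pick_lt[OF i] pick_lt[OF j] c1 i j by (simp add: blk_index[OF X' i j] blk_index[OF X i j])
  qed (use c1 c2 in auto)
qed

lemma blk_transpose: assumes X: "X \<in> carrier_mat n n"
  shows "blk cl n (transpose_mat X) a b = transpose_mat (blk cl n X b a)"
proof -
  have X': "transpose_mat X \<in> carrier_mat n n" using X by auto
  note c1 = blk_carrier[OF X, of cl b a] and c2 = blk_carrier[OF X', of cl a b]
  show ?thesis
  proof (rule eq_matI)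
    fix i j assume "i < dim_row (transpose_mat (blk cl n X b a))" "j < dim_col (transpose_mat (blk cl n X b a))"
    then have i: "i < card (cluster cl n a)" and j: "j < card (cluster cl n b)" using c1 by auto
    show "blk cl n (transpose_mat X) a b $$ (i,j) = transpose_mat (blk cl n X b a) $$ (i,j)"
      using X pick_lt[OF i] pick_lt[OF j] c1 i j by (simp add: blk_index[OF X' i j] blk_index[OF X j i])
  qed (use c1 c2 in auto)
qed


lemma minv_props:
  assumes X: "X \<in> carrier_mat m m" and inv: "invertible_mat X"
  shows "minv X \<in> carrier_mat m m" "X * minv X = 1\<^sub>m m" "minv X * X = 1\<^sub>m m"
proof -
  obtain B where B: "inverts_mat X B" "inverts_mat B X" using inv unfolding invertible_mat_def by auto
  have XB: "X * B = 1\<^sub>m m" using B(1) X unfolding inverts_mat_def by auto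
  have "dim_col (X * B) = dim_col (1\<^sub>m m :: complex mat)" using XB by (rule arg_cong)
  then have Bc: "dim_col B = m" by simp
  have BX: "B * X = 1\<^sub>m (dim_row B)" using B(2) unfolding inverts_mat_def by auto
  have "dim_col (B * X) = dim_col (1\<^sub>m (dim_row B) :: complex mat)" using BX by (rule arg_cong)
  then have Br: "dim_row B = m" using X by simp
  have Bcar: "B \<in> carrier_mat (dim_row X) (dim_row X)" using Bc Br X by auto
  have "\<exists>Y. Y \<in> carrier_mat (dim_row X) (dim_row X) \<and> inverts_mat X Y \<and> inverts_mat Y X"
    using B Bcar by blast
  then have "minv X \<in> carrier_mat (dim_row X) (dim_row X) \<and> inverts_mat X (minv X) \<and> inverts_mat (minv X) X"
    unfolding minv_def by (rule someI_ex)
  then show "minv X \<in> carrier_mat m m" "X * minv X = 1\<^sub>m m" "minv X * X = 1\<^sub>m m"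
    using X unfolding inverts_mat_def by auto
qed
lemma left_inv_eq_minv:
  assumes X: "X \<in> carrier_mat m m" and inv: "invertible_mat X"
    and L: "L \<in> carrier_mat m m" and LX: "L * X = 1\<^sub>m m"
  shows "L = minv X"
proof -
  note mp = minv_props[OF X inv]
  have "L = L * (X * minv X)" using mp L by simp
  also have "\<dots> = (L * X) * minv X" by (rule assoc_mult_mat[OF L X mp(1), symmetric])
  also have "\<dots> = minv X" using LX mp by simp
  finally show ?thesis .
qed

lemma right_inv_eq_minv:
  assumes X: "X \<in> carrier_mat m m" and inv: "invertible_mat X"
    and R: "R \<in> carrier_mat m m" and XR: "X * R = 1\<^sub>m m"
  shows "R = minv X"
proof -
  note mp = minv_props[OF X inv]
  have "R = (minv X * X) * R" using mp R by simp
  also have "\<dots> = minv X * (X * R)" by (rule assoc_mult_mat[OF mp(1) X R])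
  also have "\<dots> = minv X" using XR mp by simp
  finally show ?thesis .
qed

lemma minv_sym:
  assumes X: "X \<in> carrier_mat m m" and inv: "invertible_mat X" and s: "transpose_mat X = X"
  shows "transpose_mat (minv X) = minv X"
proof -
  note mp = minv_props[OF X inv]
  have "transpose_mat (minv X) * X = transpose_mat (minv X) * transpose_mat X" using s by simp
  also have "\<dots> = transpose_mat (X * minv X)" using transpose_mult[OF X mp(1)] by simp
  also have "\<dots> = 1\<^sub>m m" using mp by simp
  finally have e: "transpose_mat (minv X) * X = 1\<^sub>m m" .
  have c: "transpose_mat (minv X) \<in> carrier_mat m m" using mp(1) by simp
  show ?thesis by (rule left_inv_eq_minv[OF X inv c e])
qed


definition ordl :: "(nat \<Rightarrow> nat) \<Rightarrow> nat list \<Rightarrow> nat list \<Rightarrow> nat list" where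
  "ordl lev L ls = concat (map (\<lambda>l. filter (\<lambda>i. lev i = l) L) ls)"

lemma ordl_set: "set (ordl lev L ls) = {x \<in> set L. lev x \<in> set ls}"
  unfolding ordl_def by auto

lemma ordl_distinct: "distinct L \<Longrightarrow> distinct ls \<Longrightarrow> distinct (ordl lev L ls)"
proof (induction ls)
  case Nil then show ?case by (simp add: ordl_def)
next
  case (Cons l ls)
  have "ordl lev L (l # ls) = filter (\<lambda>i. lev i = l) L @ ordl lev L ls" by (simp add: ordl_def)
  moreover have "distinct (ordl lev L ls)" using Cons by simp
  moreover have "set (filter (\<lambda>i. lev i = l) L) \<inter> set (ordl lev L ls) = {}"
    using Cons(3) by (auto simp: ordl_set)
  ultimately show ?case using Cons(2) by simp
qed

lemma ordl_sorted:
  assumes "sorted_wrt R ls" "\<And>x. R x x"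
  shows "sorted_wrt (\<lambda>x y. R (lev x) (lev y)) (ordl lev L ls)"
  using assms(1)
proof (induction ls)
  case Nil then show ?case by (simp add: ordl_def)
next
  case (Cons l ls)
  have e: "ordl lev L (l # ls) = filter (\<lambda>i. lev i = l) L @ ordl lev L ls" by (simp add: ordl_def)
  have s1: "sorted_wrt (\<lambda>x y. R (lev x) (lev y)) (filter (\<lambda>i. lev i = l) L)"
  proof -
    have "\<And>xs. \<forall>x\<in>set xs. lev x = l \<Longrightarrow> sorted_wrt (\<lambda>x y. R (lev x) (lev y)) xs"
    proof -
      fix xs show "\<forall>x\<in>set xs. lev x = l \<Longrightarrow> sorted_wrt (\<lambda>x y. R (lev x) (lev y)) xs"
        by (induction xs) (auto simp: assms(2))
    qed
    then show ?thesis by simp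
  qed
  have s2: "sorted_wrt (\<lambda>x y. R (lev x) (lev y)) (ordl lev L ls)" using Cons by simp
  have s3: "\<forall>x\<in>set (filter (\<lambda>i. lev i = l) L). \<forall>y\<in>set (ordl lev L ls). R (lev x) (lev y)"
    using Cons(2) by (auto simp: ordl_set)
  show ?case unfolding e sorted_wrt_append using s1 s2 s3 by blast
qed


locale tree =
  fixes M lam r :: nat and par lev :: "nat \<Rightarrow> nat"
  assumes root: "r \<in> {1..M}" and par: "\<forall>i\<in>{1..M}. i \<noteq> r \<longrightarrow> par i \<in> {1..M}"
    and lev_range: "\<forall>i\<in>{1..M}. lev i \<in> {1..lam}"
    and lev_mono: "\<forall>i\<in>{1..M}. \<forall>j\<in>ancestors par r M i. lev i < lev j"
    and lev_root: "\<forall>i\<in>{1..M}. lev i = lam \<longleftrightarrow> i = r"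
begin

definition "RR = {(a, par a) | a. a \<in> {1..M} \<and> a \<noteq> r}"

lemma anc_iff: "j \<in> ancestors par r M i \<longleftrightarrow> (i,j) \<in> RR\<^sup>+"
  unfolding ancestors_def RR_def by simp

lemma RR_D: "(a,b) \<in> RR \<Longrightarrow> a \<in> {1..M} \<and> b \<in> {1..M} \<and> a \<noteq> r \<and> b = par a"
  unfolding RR_def using par by auto

lemma RR_fun: "(a,b) \<in> RR \<Longrightarrow> (a,c) \<in> RR \<Longrightarrow> b = c"
proof -
  assume "(a,b) \<in> RR" "(a,c) \<in> RR"
  then have "b = par a" "c = par a" using RR_D by auto
  then show "b = c" by simp
qed

lemma anc_C: "j \<in> ancestors par r M i \<Longrightarrow> i \<in> {1..M} \<and> j \<in> {1..M}"
proof -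
  assume "j \<in> ancestors par r M i"
  then have h: "(i,j) \<in> RR\<^sup>+" by (simp add: anc_iff)
  obtain z where "(i,z) \<in> RR" using tranclD[OF h] by auto
  then have "i \<in> {1..M}" using RR_D by simp
  moreover obtain z' where "(z',j) \<in> RR" using tranclD2[OF h] by auto
  then have "j \<in> {1..M}" using RR_D by simp
  ultimately show ?thesis by simp
qed

lemma anc_sub: "ancestors par r M i \<subseteq> {1..M}" using anc_C by auto

lemma anc_finite: "finite (ancestors par r M i)"
  by (rule finite_subset[OF anc_sub]) simp

lemma anc_trans: "j \<in> ancestors par r M i \<Longrightarrow> k \<in> ancestors par r M j \<Longrightarrow> k \<in> ancestors par r M i"
  unfolding anc_iff by (rule trancl_trans)

lemma anc_lev: "j \<in> ancestors par r M i \<Longrightarrow> lev i < lev j"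
proof -
  assume h: "j \<in> ancestors par r M i"
  then have "i \<in> {1..M}" using anc_C by simp
  then show "lev i < lev j" using lev_mono h by simp
qed

lemma anc_irrefl: "i \<notin> ancestors par r M i"
  using anc_lev by auto

lemma anc_root: "ancestors par r M r = {}"
proof -
  { fix j assume "(r,j) \<in> RR\<^sup>+"
    then obtain z where "(r,z) \<in> RR" using tranclD[of r j RR] by auto
    then have False using RR_D[OF \<open>(r,z) \<in> RR\<close>] by simp }
  then show ?thesis by (auto simp: anc_iff)
qed

lemma anc_chain_aux:
  assumes "(i,j) \<in> RR\<^sup>+"
  shows "\<forall>k. (i,k) \<in> RR\<^sup>+ \<longrightarrow> j = k \<or> (j,k) \<in> RR\<^sup>+ \<or> (k,j) \<in> RR\<^sup>+"
  using assms
proof (induction rule: converse_trancl_induct)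
  case (base y)
  note yj = base
  show ?case
  proof (intro allI impI)
    fix k assume yk: "(y,k) \<in> RR\<^sup>+"
    obtain z' where z': "(y,z') \<in> RR" "(z',k) \<in> RR\<^sup>*" using tranclD[OF yk] by auto
    have "z' = j" using RR_fun[OF z'(1) yj] .
    then have "(j,k) \<in> RR\<^sup>*" using z'(2) by simp
    then show "j = k \<or> (j,k) \<in> RR\<^sup>+ \<or> (k,j) \<in> RR\<^sup>+" by (auto simp: rtrancl_eq_or_trancl)
  qed
next
  case (step y z)
  note yz = step(1) and zj = step(2) and IH = step(3)
  show ?case
  proof (intro allI impI)
    fix k assume yk: "(y,k) \<in> RR\<^sup>+"
    obtain z' where z': "(y,z') \<in> RR" "(z',k) \<in> RR\<^sup>*" using tranclD[OF yk] by auto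
    have "z' = z" using RR_fun[OF z'(1) yz] .
    then have "(z,k) \<in> RR\<^sup>*" using z'(2) by simp
    then have "z = k \<or> (z,k) \<in> RR\<^sup>+" by (auto simp: rtrancl_eq_or_trancl)
    then show "j = k \<or> (j,k) \<in> RR\<^sup>+ \<or> (k,j) \<in> RR\<^sup>+"
    proof
      assume "z = k" then show ?thesis using zj by simp
    next
      assume "(z,k) \<in> RR\<^sup>+" then show ?thesis using IH by simp
    qed
  qed
qed

lemma anc_chain: "j \<in> ancestors par r M i \<Longrightarrow> k \<in> ancestors par r M i \<Longrightarrow>
   related (ancestors par r M) j k"
proof -
  assume "j \<in> ancestors par r M i" "k \<in> ancestors par r M i"
  then have h: "(i,j) \<in> RR\<^sup>+" "(i,k) \<in> RR\<^sup>+" by (simp_all add: anc_iff)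
  have "j = k \<or> (j,k) \<in> RR\<^sup>+ \<or> (k,j) \<in> RR\<^sup>+" using anc_chain_aux[OF h(1)] h(2) by simp
  then show ?thesis unfolding related_def anc_iff by auto
qed

lemma nonroot_lev: "i \<in> {1..M} \<Longrightarrow> i \<noteq> r \<Longrightarrow> lev i < lam"
proof -
  assume i: "i \<in> {1..M}" "i \<noteq> r"
  have "lev i \<in> {1..lam}" using lev_range i(1) by simp
  moreover have "lev i \<noteq> lam" using lev_root i by simp
  ultimately show "lev i < lam" by simp
qed

lemma root_lev: "lev r = lam" using lev_root root by simp

lemma fwd_eq: "fwd_order lev lam M = ordl lev [1..<Suc M] [1..<lam]"
  unfolding fwd_order_def ordl_def ..
lemma bwd_eq: "bwd_order lev lam M = ordl lev [1..<Suc M] (rev [1..<lam])"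
  unfolding bwd_order_def ordl_def ..

lemma set_orders: "set (fwd_order lev lam M) = {1..M} - {r}" "set (bwd_order lev lam M) = {1..M} - {r}"
proof -
  have "{x \<in> set [1..<Suc M]. lev x \<in> set [1..<lam]} = {1..M} - {r}"
  proof -
    { fix x assume x: "x \<in> {1..M}"
      have "lev x \<in> {1..lam}" using lev_range x by simp
      moreover have "lev x = lam \<longleftrightarrow> x = r" using lev_root x by simp
      ultimately have "lev x \<in> {1..<lam} \<longleftrightarrow> x \<noteq> r" by auto }
    note * = this
    have e1: "set [1..<Suc M] = {1..M}" by auto
    have e2: "set [1..<lam] = {1..<lam}" by simp
    have "\<And>x. x \<in> {x \<in> {1..M}. lev x \<in> {1..<lam}} \<longleftrightarrow> x \<in> {1..M} - {r}"
      using * by auto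
    then have "{x \<in> {1..M}. lev x \<in> {1..<lam}} = {1..M} - {r}" by (rule Set.set_eqI)
    then show ?thesis unfolding e1 e2 .
  qed
  then show "set (fwd_order lev lam M) = {1..M} - {r}" "set (bwd_order lev lam M) = {1..M} - {r}"
    unfolding fwd_eq bwd_eq ordl_set by auto
qed

lemma distinct_orders: "distinct (fwd_order lev lam M)" "distinct (bwd_order lev lam M)"
  unfolding fwd_eq bwd_eq by (auto intro!: ordl_distinct)

lemma sorted_fwd: "sorted_wrt (\<lambda>x y. lev x \<le> lev y) (fwd_order lev lam M)"
  unfolding fwd_eq by (rule ordl_sorted) simp_all

lemma sorted_bwd: "sorted_wrt (\<lambda>x y. lev x \<ge> lev y) (bwd_order lev lam M)"
  unfolding bwd_eq by (rule ordl_sorted) (simp_all add: sorted_wrt_rev)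

lemma fwd_split:
  assumes e: "fwd_order lev lam M = xs @ i # ys"
  shows "i \<in> {1..M}" "i \<noteq> r" "i \<notin> set xs" "\<And>a. a \<in> ancestors par r M i \<Longrightarrow> a \<notin> set xs"
    "\<And>a. a \<in> {1..M} \<Longrightarrow> a \<notin> set xs \<Longrightarrow> a \<noteq> i \<Longrightarrow> i \<notin> ancestors par r M a"
proof -
  have "i \<in> set (xs @ i # ys)" by simp
  then have i: "i \<in> {1..M} - {r}" using set_orders(1) e by (simp only:)
  then show "i \<in> {1..M}" "i \<noteq> r" by auto
  show "i \<notin> set xs" using distinct_orders(1) e by simp
  have s: "sorted_wrt (\<lambda>x y. lev x \<le> lev y) (xs @ i # ys)" using sorted_fwd e by simp
  then have sx: "\<forall>x\<in>set xs. lev x \<le> lev i" and sy: "\<forall>y\<in>set ys. lev i \<le> lev y"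
    by (auto simp: sorted_wrt_append)
  show "\<And>a. a \<in> ancestors par r M i \<Longrightarrow> a \<notin> set xs"
  proof
    fix a assume "a \<in> ancestors par r M i" "a \<in> set xs"
    then have "lev i < lev a" "lev a \<le> lev i" using anc_lev sx by auto
    then show False by simp
  qed
  fix a assume a: "a \<in> {1..M}" "a \<notin> set xs" "a \<noteq> i"
  show "i \<notin> ancestors par r M a"
  proof
    assume h: "i \<in> ancestors par r M a"
    then have la: "lev a < lev i" by (rule anc_lev)
    have "lev i \<le> lam" using lev_range i by auto
    then have "a \<noteq> r" using la root_lev by auto
    then have "a \<in> set (xs @ i # ys)" using a(1) set_orders(1) e by auto
    then have "a \<in> set ys" using a by auto
    then show False using sy la by auto
  qed
qed

lemma bwd_split:
  assumes e: "bwd_order lev lam M = xs @ i # ys"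
  shows "i \<in> {1..M}" "i \<noteq> r" "i \<notin> set xs"
    "\<And>a. a \<in> {1..M} \<Longrightarrow> lev i \<le> lev a \<Longrightarrow> ancestors par r M a \<subseteq> set xs \<union> {r}"
    "\<And>a. a \<in> set xs \<Longrightarrow> lev i \<le> lev a"
proof -
  have "i \<in> set (xs @ i # ys)" by simp
  then have i: "i \<in> {1..M} - {r}" using set_orders(2) e by (simp only:)
  then show "i \<in> {1..M}" "i \<noteq> r" by auto
  show "i \<notin> set xs" using distinct_orders(2) e by simp
  have s: "sorted_wrt (\<lambda>x y. lev x \<ge> lev y) (xs @ i # ys)" using sorted_bwd e by simp
  then have sx: "\<forall>x\<in>set xs. lev i \<le> lev x" and sy: "\<forall>y\<in>set ys. lev y \<le> lev i"
    by (auto simp: sorted_wrt_append)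
  show "\<And>a. a \<in> set xs \<Longrightarrow> lev i \<le> lev a" using sx by auto
  fix a assume a: "a \<in> {1..M}" "lev i \<le> lev a"
  show "ancestors par r M a \<subseteq> set xs \<union> {r}"
  proof
    fix b assume b: "b \<in> ancestors par r M a"
    then have lb: "lev a < lev b" by (rule anc_lev)
    have bC: "b \<in> {1..M}" using anc_C[OF b] by simp
    show "b \<in> set xs \<union> {r}"
    proof (cases "b = r")
      case False
      then have "b \<in> set (xs @ i # ys)" using bC set_orders(2) e by auto
      moreover have "b \<noteq> i" using lb a by auto
      moreover have "b \<notin> set ys"
      proof
        assume "b \<in> set ys" then have "lev b \<le> lev i" using sy by simp
        then show False using lb a by simp
      qed
      ultimately show ?thesis by auto
    qed simp
  qed
qed

end

lemma adj_mult: fixes X Y :: "complex mat" assumes X: "X \<in> carrier_mat a m" and Y: "Y \<in> carrier_mat m c"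
  shows "mat_adjoint (X * Y) = mat_adjoint Y * mat_adjoint X"
proof (rule eq_matI)
  fix i j assume "i < dim_row (mat_adjoint Y * mat_adjoint X)" "j < dim_col (mat_adjoint Y * mat_adjoint X)"
  then have i: "i < c" and j: "j < a" using X Y by auto
  have "mat_adjoint (X * Y) $$ (i,j) = cnj (\<Sum>s<m. X $$ (j,s) * Y $$ (s,i))"
    using X Y i j by (simp add: scalar_prod_def lessThan_atLeast0)
  also have "\<dots> = (\<Sum>s<m. cnj (Y $$ (s,i)) * cnj (X $$ (j,s)))"
    by (simp add: mult.commute)
  also have "\<dots> = (mat_adjoint Y * mat_adjoint X) $$ (i,j)"
    using X Y i j by (simp add: scalar_prod_def lessThan_atLeast0)
  finally show "mat_adjoint (X * Y) $$ (i,j) = (mat_adjoint Y * mat_adjoint X) $$ (i,j)" .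
qed (use X Y in auto)

lemma adj_adj: fixes X :: "complex mat" shows "mat_adjoint (mat_adjoint X) = X"
  by (rule eq_matI) auto

lemma adj_uminus: fixes X :: "complex mat" shows "mat_adjoint (- X) = - mat_adjoint X"
  by (rule eq_matI) auto

locale setting = tree M lam r par lev
  for M lam r :: nat and par lev :: "nat \<Rightarrow> nat" +
  fixes n :: nat and cl :: "nat \<Rightarrow> nat" and A Sig :: "complex mat"
  assumes A: "A \<in> carrier_mat n n" and A_inv: "invertible_mat A"
    and A_sym: "transpose_mat A = A"
    and cl: "\<forall>k<n. cl k \<in> {1..M}"
    and sparse: "\<forall>i\<in>{1..M}. \<forall>j\<in>{1..M}. \<not> related (ancestors par r M) i j \<longrightarrow>
                   blk cl n A i j = 0\<^sub>m (card (cluster cl n i)) (card (cluster cl n j))"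
    and Sig: "Sig \<in> carrier_mat n n"
    and Sig_diag: "\<forall>i\<in>{1..M}. \<forall>j\<in>{1..M}. i \<noteq> j \<longrightarrow>
                   blk cl n Sig i j = 0\<^sub>m (card (cluster cl n i)) (card (cluster cl n j))"
    and Sig_skew: "mat_adjoint Sig = - Sig"
    and piv_inv: "\<forall>i\<in>set (fwd_order lev lam M). invertible_mat (state_before (ancestors par r M) (blk cl n A) (fwd_order lev lam M) i i i)"
    and D_inv: "\<forall>i\<in>{1..M}. invertible_mat (Dblk (ancestors par r M) (blk cl n A) (fwd_order lev lam M) i)"
begin

abbreviation "Pa \<equiv> ancestors par r M"
abbreviation "CC \<equiv> {1..M}"
abbreviation "ford \<equiv> fwd_order lev lam M"
abbreviation "bwd \<equiv> bwd_order lev lam M"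
abbreviation "dd a \<equiv> card (cluster cl n a)"
abbreviation "B0 \<equiv> blk cl n A"
abbreviation "GG \<equiv> minv A * Sig * mat_adjoint (minv A)"
abbreviation "GB \<equiv> blk cl n GG"
abbreviation "SB \<equiv> state_before Pa B0 ford"
abbreviation "Ps \<equiv> Psi Pa B0 ford"

lemma Ai: "minv A \<in> carrier_mat n n" "A * minv A = 1\<^sub>m n" "minv A * A = 1\<^sub>m n"
  using minv_props[OF A A_inv] by auto

lemma GG_carrier: "GG \<in> carrier_mat n n"
  using Ai Sig by auto

lemma GB_carrier: "GB a b \<in> carrier_mat (dd a) (dd b)"
  by (rule blk_carrier[OF GG_carrier])

lemma B0_carrier: "B0 a b \<in> carrier_mat (dd a) (dd b)"
  by (rule blk_carrier[OF A])

lemma GG_skew: "mat_adjoint GG = - GG"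
proof -
  have c1: "minv A * Sig \<in> carrier_mat n n" using Ai Sig by auto
  have c2: "mat_adjoint (minv A) \<in> carrier_mat n n" using Ai by auto
  have "mat_adjoint GG = mat_adjoint (mat_adjoint (minv A)) * mat_adjoint (minv A * Sig)"
    by (rule adj_mult[OF c1 c2])
  also have "\<dots> = minv A * (mat_adjoint Sig * mat_adjoint (minv A))"
    unfolding adj_adj adj_mult[OF Ai(1) Sig] ..
  also have "\<dots> = minv A * (- Sig * mat_adjoint (minv A))" unfolding Sig_skew ..
  also have "\<dots> = - (minv A * (Sig * mat_adjoint (minv A)))"
  proof -
    have "- Sig * mat_adjoint (minv A) = - (Sig * mat_adjoint (minv A))"
      by (rule uminus_mult_left_mat) (use Sig c2 Ai(1) in auto)
    moreover have "minv A * - (Sig * mat_adjoint (minv A)) = - (minv A * (Sig * mat_adjoint (minv A)))"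
      by (rule uminus_mult_right_mat) (use Sig c2 Ai(1) in auto)
    ultimately show ?thesis by simp
  qed
  also have "minv A * (Sig * mat_adjoint (minv A)) = GG"
    by (rule assoc_mult_mat[OF Ai(1) Sig c2, symmetric])
  finally show ?thesis .
qed

lemma GB_skew: "GB a b = - mat_adjoint (GB b a)"
proof -
  have "mat_adjoint (GB b a) = blk cl n (mat_adjoint GG) a b" by (rule blk_adjoint[OF GG_carrier, symmetric])
  also have "\<dots> = - GB a b" unfolding GG_skew by (rule blk_uminus[OF GG_carrier])
  finally have "mat_adjoint (GB b a) = - GB a b" .
  then have "- mat_adjoint (GB b a) = - (- GB a b)" by simp
  also have "\<dots> = GB a b" using GB_carrier[of a b] by simp
  finally show ?thesis by simp
qed

lemma AG_full: "A * GG = Sig * mat_adjoint (minv A)"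
proof -
  have c2: "mat_adjoint (minv A) \<in> carrier_mat n n" using Ai by auto
  have "A * GG = A * (minv A * (Sig * mat_adjoint (minv A)))"
    by (simp only: assoc_mult_mat[OF Ai(1) Sig c2])
  also have "\<dots> = (A * minv A) * (Sig * mat_adjoint (minv A))"
    by (rule assoc_mult_mat[symmetric, OF A Ai(1) mult_carrier_mat[OF Sig c2]])
  also have "\<dots> = Sig * mat_adjoint (minv A)" using Ai(2) Sig c2 by simp
  finally show ?thesis .
qed

lemma AG: assumes j: "j \<in> CC"
  shows "msum (dd j) (dd k) CC (\<lambda>b. B0 j b * GB b k) = blk cl n Sig j j * mat_adjoint (blk cl n (minv A) k j)"
proof -
  have c2: "mat_adjoint (minv A) \<in> carrier_mat n n" using Ai by auto
  have fin: "finite CC" by simp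
  have "msum (dd j) (dd k) CC (\<lambda>b. B0 j b * GB b k) = blk cl n (A * GG) j k"
    by (rule blk_mult[OF A GG_carrier cl fin, symmetric])
  also have "\<dots> = blk cl n (Sig * mat_adjoint (minv A)) j k" unfolding AG_full ..
  also have "\<dots> = msum (dd j) (dd k) CC (\<lambda>c. blk cl n Sig j c * blk cl n (mat_adjoint (minv A)) c k)"
    by (rule blk_mult[OF Sig c2 cl fin])
  also have "\<dots> = msum (dd j) (dd k) {j} (\<lambda>c. blk cl n Sig j c * blk cl n (mat_adjoint (minv A)) c k)"
  proof (rule msum_mono_neutral[OF fin])
    show "{j} \<subseteq> CC" using j by simp
    fix c assume c: "c \<in> CC - {j}"
    then have "blk cl n Sig j c = 0\<^sub>m (dd j) (dd c)" using Sig_diag j by auto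
    moreover have "blk cl n (mat_adjoint (minv A)) c k \<in> carrier_mat (dd c) (dd k)" by (rule blk_carrier[OF c2])
    ultimately show "blk cl n Sig j c * blk cl n (mat_adjoint (minv A)) c k = 0\<^sub>m (dd j) (dd k)" by simp
  qed
  also have "\<dots> = blk cl n Sig j j * blk cl n (mat_adjoint (minv A)) j k"
    by (rule msum_single, rule mult_carrier_mat[OF blk_carrier[OF Sig] blk_carrier[OF c2]])
  also have "\<dots> = blk cl n Sig j j * mat_adjoint (blk cl n (minv A) k j)"
    unfolding blk_adjoint[OF Ai(1)] ..
  finally show ?thesis .
qed

end

context setting begin

abbreviation "N0 \<equiv> N_init Pa (blk cl n Sig) (blk cl n (minv A))"
abbreviation "Bst xs \<equiv> folding Pa B0 xs"
abbreviation "Nst xs \<equiv> foldl (\<lambda>N i. N_step Pa (Ps i) i N) N0 xs"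

definition FInv :: "nat list \<Rightarrow> bool" where
 "FInv xs \<longleftrightarrow>
   (\<forall>a\<in>CC. \<forall>b\<in>CC. Bst xs a b \<in> carrier_mat (dd a) (dd b)) \<and>
   (\<forall>a\<in>CC - set xs. \<forall>b\<in>CC - set xs. \<not> related Pa a b \<longrightarrow> Bst xs a b = 0\<^sub>m (dd a) (dd b)) \<and>
   (\<forall>a\<in>CC - set xs. \<forall>b\<in>CC - set xs. transpose_mat (Bst xs a b) = Bst xs b a) \<and>
   (\<forall>j\<in>CC - set xs. \<forall>k. (k \<in> Pa j \<or> k = j) \<longrightarrow>
       Nst xs j k = msum (dd j) (dd k) (CC - set xs) (\<lambda>b. Bst xs j b * GB b k)) \<and>
   (\<forall>x\<in>set xs. Bst xs x x = SB x x x \<and> (\<forall>k. (k \<in> Pa x \<or> k = x) \<longrightarrow>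
       Nst xs x k = msum (dd x) (dd k) (Pa x \<union> {x}) (\<lambda>b. SB x x b * GB b k)))"

lemma FInvI:
  assumes "\<And>a b. a \<in> CC \<Longrightarrow> b \<in> CC \<Longrightarrow> Bst xs a b \<in> carrier_mat (dd a) (dd b)"
    "\<And>a b. a \<in> CC - set xs \<Longrightarrow> b \<in> CC - set xs \<Longrightarrow> \<not> related Pa a b \<Longrightarrow> Bst xs a b = 0\<^sub>m (dd a) (dd b)"
    "\<And>a b. a \<in> CC - set xs \<Longrightarrow> b \<in> CC - set xs \<Longrightarrow> transpose_mat (Bst xs a b) = Bst xs b a"
    "\<And>j k. j \<in> CC - set xs \<Longrightarrow> k \<in> Pa j \<or> k = j \<Longrightarrow>
       Nst xs j k = msum (dd j) (dd k) (CC - set xs) (\<lambda>b. Bst xs j b * GB b k)"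
    "\<And>x. x \<in> set xs \<Longrightarrow> Bst xs x x = SB x x x"
    "\<And>x k. x \<in> set xs \<Longrightarrow> k \<in> Pa x \<or> k = x \<Longrightarrow>
       Nst xs x k = msum (dd x) (dd k) (Pa x \<union> {x}) (\<lambda>b. SB x x b * GB b k)"
  shows "FInv xs"
  unfolding FInv_def using assms by (intro conjI ballI allI impI) simp_all

lemma FInvD:
  assumes "FInv xs"
  shows "\<And>a b. a \<in> CC \<Longrightarrow> b \<in> CC \<Longrightarrow> Bst xs a b \<in> carrier_mat (dd a) (dd b)"
    "\<And>a b. a \<in> CC - set xs \<Longrightarrow> b \<in> CC - set xs \<Longrightarrow> \<not> related Pa a b \<Longrightarrow> Bst xs a b = 0\<^sub>m (dd a) (dd b)"
    "\<And>a b. a \<in> CC - set xs \<Longrightarrow> b \<in> CC - set xs \<Longrightarrow> transpose_mat (Bst xs a b) = Bst xs b a"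
    "\<And>x. x \<in> set xs \<Longrightarrow> Bst xs x x = SB x x x"
  using assms unfolding FInv_def by simp_all

lemma FInvD4:
  assumes "FInv xs" "j \<in> CC - set xs" "k \<in> Pa j \<or> k = j"
  shows "Nst xs j k = msum (dd j) (dd k) (CC - set xs) (\<lambda>b. Bst xs j b * GB b k)"
proof -
  have c: "\<forall>j\<in>CC - set xs. \<forall>k. (k \<in> Pa j \<or> k = j) \<longrightarrow>
       Nst xs j k = msum (dd j) (dd k) (CC - set xs) (\<lambda>b. Bst xs j b * GB b k)"
    using assms(1) unfolding FInv_def by (elim conjE) assumption
  show ?thesis using mp[OF spec[OF bspec[OF c assms(2)], of k] assms(3)] .
qed

lemma FInvD6:
  assumes "FInv xs" "x \<in> set xs" "k \<in> Pa x \<or> k = x"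
  shows "Nst xs x k = msum (dd x) (dd k) (Pa x \<union> {x}) (\<lambda>b. SB x x b * GB b k)"
proof -
  have c: "\<forall>x\<in>set xs. Bst xs x x = SB x x x \<and> (\<forall>k. (k \<in> Pa x \<or> k = x) \<longrightarrow>
       Nst xs x k = msum (dd x) (dd k) (Pa x \<union> {x}) (\<lambda>b. SB x x b * GB b k))"
    using assms(1) unfolding FInv_def by (elim conjE) assumption
  show ?thesis using mp[OF spec[OF conjunct2[OF bspec[OF c assms(2)]], of k] assms(3)] .
qed

lemma FInv_base: "FInv []"
proof (rule FInvI)
  have e1: "Bst [] = B0" by (simp add: folding_def)
  have e2: "Nst [] = N0" by simp
  show "\<And>a b. a \<in> CC \<Longrightarrow> b \<in> CC \<Longrightarrow> Bst [] a b \<in> carrier_mat (dd a) (dd b)"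
    unfolding e1 by (rule B0_carrier)
  show "\<And>a b. a \<in> CC - set [] \<Longrightarrow> b \<in> CC - set [] \<Longrightarrow> \<not> related Pa a b \<Longrightarrow> Bst [] a b = 0\<^sub>m (dd a) (dd b)"
    unfolding e1 using sparse by simp
  show "\<And>a b. a \<in> CC - set [] \<Longrightarrow> b \<in> CC - set [] \<Longrightarrow> transpose_mat (Bst [] a b) = Bst [] b a"
    unfolding e1 by (simp add: blk_transpose[OF A, symmetric] A_sym)
  show "\<And>j k. j \<in> CC - set [] \<Longrightarrow> k \<in> Pa j \<or> k = j \<Longrightarrow>
       Nst [] j k = msum (dd j) (dd k) (CC - set []) (\<lambda>b. Bst [] j b * GB b k)"
  proof -
    fix j k assume j: "j \<in> CC - set []" and k: "k \<in> Pa j \<or> k = j"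
    have rel: "related Pa j k" using k unfolding related_def by auto
    have "Nst [] j k = blk cl n Sig j j * mat_adjoint (blk cl n (minv A) k j)"
      unfolding e2 N_init_def using rel by simp
    also have "\<dots> = msum (dd j) (dd k) CC (\<lambda>b. B0 j b * GB b k)"
      using AG[of j k] j by simp
    finally show "Nst [] j k = msum (dd j) (dd k) (CC - set []) (\<lambda>b. Bst [] j b * GB b k)"
      unfolding e1 by simp
  qed
qed simp_all

end

context setting begin

context
  fixes xs i ys assumes sp: "ford = xs @ i # ys" and inv: "FInv xs"
begin

lemma iC: "i \<in> CC" and inr: "i \<noteq> r" and ixs: "i \<notin> set xs"
  using fwd_split(1-3)[OF sp] by auto

lemma iU: "i \<in> CC - set xs" using iC ixs by simp

lemma PiU: "a \<in> Pa i \<Longrightarrow> a \<in> CC - set xs"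
  using fwd_split(4)[OF sp] anc_C by auto

lemma desc: "a \<in> CC - set xs \<Longrightarrow> a \<noteq> i \<Longrightarrow> i \<notin> Pa a"
  using fwd_split(5)[OF sp] by simp

lemma zero_ia: assumes "a \<in> CC - set xs" "a \<noteq> i" "a \<notin> Pa i"
  shows "Bst xs i a = 0\<^sub>m (dd i) (dd a)" "Bst xs a i = 0\<^sub>m (dd a) (dd i)"
proof -
  have "i \<notin> Pa a" using desc assms by simp
  then have "\<not> related Pa i a" "\<not> related Pa a i" using assms unfolding related_def by auto
  then show "Bst xs i a = 0\<^sub>m (dd i) (dd a)" "Bst xs a i = 0\<^sub>m (dd a) (dd i)"
    using FInvD(2)[OF inv] iU assms(1) by auto
qed

lemma SBi: "SB i = Bst xs"
proof -
  have "takeWhile (\<lambda>x. x \<noteq> i) (xs @ i # ys) = xs @ takeWhile (\<lambda>x. x \<noteq> i) (i # ys)"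
    by (rule takeWhile_append2) (use ixs in auto)
  then have "takeWhile (\<lambda>x. x \<noteq> i) ford = xs" using sp by simp
  then show ?thesis unfolding state_before_def by simp
qed

lemma Psi_i: "Ps i c = - minv (Bst xs i i) * Bst xs i c"
  unfolding Psi_def SBi ..

lemma Bii: "Bst xs i i \<in> carrier_mat (dd i) (dd i)" using FInvD(1)[OF inv] iC by simp

lemma piv: "invertible_mat (Bst xs i i)"
proof -
  have "i \<in> set ford" using sp by simp
  then have "invertible_mat (SB i i i)" by (rule bspec[OF piv_inv])
  then show ?thesis unfolding SBi .
qed

lemma Binv: "minv (Bst xs i i) \<in> carrier_mat (dd i) (dd i)" "minv (Bst xs i i) * Bst xs i i = 1\<^sub>m (dd i)"
  "transpose_mat (minv (Bst xs i i)) = minv (Bst xs i i)"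
proof -
  show "minv (Bst xs i i) \<in> carrier_mat (dd i) (dd i)" "minv (Bst xs i i) * Bst xs i i = 1\<^sub>m (dd i)"
    using minv_props[OF Bii piv] by auto
  have "transpose_mat (Bst xs i i) = Bst xs i i" using FInvD(3)[OF inv] iU by simp
  then show "transpose_mat (minv (Bst xs i i)) = minv (Bst xs i i)" by (rule minv_sym[OF Bii piv])
qed

lemma nBinv: "- minv (Bst xs i i) \<in> carrier_mat (dd i) (dd i)" using Binv(1) by simp

lemma Psc: "c \<in> CC \<Longrightarrow> Ps i c \<in> carrier_mat (dd i) (dd c)"
  unfolding Psi_i using nBinv FInvD(1)[OF inv] iC by (simp add: mult_carrier_mat)

lemma TP: assumes j: "j \<in> CC - set xs"
  shows "transpose_mat (Ps i j) = Bst xs j i * (- minv (Bst xs i i))"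
proof -
  have cj: "Bst xs i j \<in> carrier_mat (dd i) (dd j)" using FInvD(1)[OF inv] iC j by simp
  have "transpose_mat (Ps i j) = transpose_mat (Bst xs i j) * transpose_mat (- minv (Bst xs i i))"
    unfolding Psi_i by (rule transpose_mult[OF nBinv cj])
  also have "transpose_mat (Bst xs i j) = Bst xs j i" using FInvD(3)[OF inv] iU j by simp
  also have "transpose_mat (- minv (Bst xs i i)) = - minv (Bst xs i i)"
    unfolding transpose_uminus Binv(3) ..
  finally show ?thesis .
qed

lemma K: assumes j: "j \<in> CC - set xs"
  shows "transpose_mat (Ps i j) * Bst xs i i = - Bst xs j i"
proof -
  have cj: "Bst xs j i \<in> carrier_mat (dd j) (dd i)" using FInvD(1)[OF inv] iC j by simp
  have "transpose_mat (Ps i j) * Bst xs i i = Bst xs j i * (- minv (Bst xs i i) * Bst xs i i)"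
    unfolding TP[OF j] by (rule assoc_mult_mat[OF cj nBinv Bii])
  also have "- minv (Bst xs i i) * Bst xs i i = - (1\<^sub>m (dd i))"
    using Binv Bii by simp
  also have "Bst xs j i * - (1\<^sub>m (dd i)) = - Bst xs j i"
    using cj by simp
  finally show ?thesis .
qed

lemma Bst_snoc: "Bst (xs @ [i]) = fold_step Pa i (Bst xs)"
  by (simp add: folding_def)

lemma Nst_snoc: "Nst (xs @ [i]) = N_step Pa (Ps i) i (Nst xs)"
  by simp

lemma Bnew: "fold_step Pa i (Bst xs) a b =
  (if a \<in> Pa i \<and> b \<in> Pa i then Bst xs a b + transpose_mat (Ps i a) * Bst xs i b
   else if (a = i \<and> b \<in> Pa i) \<or> (b = i \<and> a \<in> Pa i) then 0\<^sub>m (dim_row (Bst xs a b)) (dim_col (Bst xs a b))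
   else Bst xs a b)"
  unfolding fold_step_def Psi_i ..


lemma UU: "CC - set (xs @ [i]) = (CC - set xs) - {i}" by auto
lemma Uins: "CC - set xs = insert i ((CC - set xs) - {i})" using iU by auto
lemma finU: "finite ((CC - set xs) - {i})" by simp

lemma Bc: "a \<in> CC \<Longrightarrow> b \<in> CC \<Longrightarrow> Bst xs a b \<in> carrier_mat (dd a) (dd b)"
  by (rule FInvD(1)[OF inv])

lemma TPc: "a \<in> CC \<Longrightarrow> transpose_mat (Ps i a) \<in> carrier_mat (dd a) (dd i)"
  using Psc by simp

lemma F1n: assumes a: "a \<in> CC" and b: "b \<in> CC"
  shows "Bst (xs @ [i]) a b \<in> carrier_mat (dd a) (dd b)"
proof -
  have c1: "Bst xs a b \<in> carrier_mat (dd a) (dd b)" by (rule Bc[OF a b])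
  have c2: "transpose_mat (Ps i a) * Bst xs i b \<in> carrier_mat (dd a) (dd b)"
    by (rule mult_carrier_mat[OF TPc[OF a] Bc[OF iC b]])
  show ?thesis unfolding Bst_snoc Bnew using c1 c2 by auto
qed

lemma F2n: assumes a: "a \<in> CC - set (xs @ [i])" and b: "b \<in> CC - set (xs @ [i])"
  and nr: "\<not> related Pa a b"
  shows "Bst (xs @ [i]) a b = 0\<^sub>m (dd a) (dd b)"
proof -
  have "\<not> (a \<in> Pa i \<and> b \<in> Pa i)" using anc_chain nr by blast
  moreover have "a \<noteq> i" "b \<noteq> i" using a b by auto
  ultimately have "Bst (xs @ [i]) a b = Bst xs a b" unfolding Bst_snoc Bnew by auto
  also have "\<dots> = 0\<^sub>m (dd a) (dd b)" using FInvD(2)[OF inv] a b nr by simp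
  finally show ?thesis .
qed

lemma F3n: assumes a: "a \<in> CC - set (xs @ [i])" and b: "b \<in> CC - set (xs @ [i])"
  shows "transpose_mat (Bst (xs @ [i]) a b) = Bst (xs @ [i]) b a"
proof (cases "a \<in> Pa i \<and> b \<in> Pa i")
  case True
  have aU: "a \<in> CC - set xs" and bU: "b \<in> CC - set xs" using a b by auto
  have aC: "a \<in> CC" and bC: "b \<in> CC" using a b by auto
  have e1: "Bst (xs @ [i]) a b = Bst xs a b + transpose_mat (Ps i a) * Bst xs i b"
    unfolding Bst_snoc Bnew using True by simp
  have e2: "Bst (xs @ [i]) b a = Bst xs b a + transpose_mat (Ps i b) * Bst xs i a"
    unfolding Bst_snoc Bnew using True by simp
  have "transpose_mat (Bst xs a b + transpose_mat (Ps i a) * Bst xs i b)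
      = transpose_mat (Bst xs a b) + transpose_mat (transpose_mat (Ps i a) * Bst xs i b)"
    by (rule transpose_add[OF Bc[OF aC bC] mult_carrier_mat[OF TPc[OF aC] Bc[OF iC bC]]])
  also have "transpose_mat (Bst xs a b) = Bst xs b a" using FInvD(3)[OF inv] aU bU by simp
  also have "transpose_mat (transpose_mat (Ps i a) * Bst xs i b) = transpose_mat (Bst xs i b) * Ps i a"
    using transpose_mult[OF TPc[OF aC] Bc[OF iC bC]] by simp
  also have "transpose_mat (Bst xs i b) = Bst xs b i" using FInvD(3)[OF inv] iU bU by simp
  also have "Bst xs b i * Ps i a = transpose_mat (Ps i b) * Bst xs i a"
  proof -
    have "Bst xs b i * Ps i a = Bst xs b i * (- minv (Bst xs i i) * Bst xs i a)" unfolding Psi_i ..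
    also have "\<dots> = (Bst xs b i * (- minv (Bst xs i i))) * Bst xs i a"
      by (rule assoc_mult_mat[OF Bc[OF bC iC] nBinv Bc[OF iC aC], symmetric])
    also have "\<dots> = transpose_mat (Ps i b) * Bst xs i a" unfolding TP[OF bU] ..
    finally show ?thesis .
  qed
  finally show ?thesis unfolding e1 e2 .
next
  case False
  have "a \<noteq> i" "b \<noteq> i" using a b by auto
  then have "Bst (xs @ [i]) a b = Bst xs a b" "Bst (xs @ [i]) b a = Bst xs b a"
    unfolding Bst_snoc Bnew using False by auto
  then show ?thesis using FInvD(3)[OF inv] a b by simp
qed

lemma F5n_B: "x \<in> set (xs @ [i]) \<Longrightarrow> Bst (xs @ [i]) x x = SB x x x"
proof -
  assume x: "x \<in> set (xs @ [i])"
  have xP: "x \<notin> Pa i"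
  proof
    assume "x \<in> Pa i"
    then have "x \<in> CC - set xs" by (rule PiU)
    moreover have "x \<noteq> i" using \<open>x \<in> Pa i\<close> anc_irrefl by auto
    ultimately show False using x by simp
  qed
  have "Bst (xs @ [i]) x x = Bst xs x x" unfolding Bst_snoc Bnew using xP by simp
  also have "\<dots> = SB x x x"
  proof (cases "x = i")
    case True then show ?thesis using SBi by simp
  next
    case False then have "x \<in> set xs" using x by simp
    then show ?thesis using FInvD(4)[OF inv] by simp
  qed
  finally show ?thesis .
qed

lemma F5n_N: assumes x: "x \<in> set (xs @ [i])" and k: "k \<in> Pa x \<or> k = x"
  shows "Nst (xs @ [i]) x k = msum (dd x) (dd k) (Pa x \<union> {x}) (\<lambda>b. SB x x b * GB b k)"
proof -
  have xP: "x \<notin> Pa i"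
  proof
    assume "x \<in> Pa i"
    then have "x \<in> CC - set xs" by (rule PiU)
    moreover have "x \<noteq> i" using \<open>x \<in> Pa i\<close> anc_irrefl by auto
    ultimately show False using x by simp
  qed
  have e: "Nst (xs @ [i]) x k = Nst xs x k" unfolding Nst_snoc N_step_def using xP by simp
  show ?thesis
  proof (cases "x = i")
    case False
    then have "x \<in> set xs" using x by simp
    then show ?thesis unfolding e by (rule FInvD6[OF inv _ k])
  next
    case True
    have "Nst xs i k = msum (dd i) (dd k) (CC - set xs) (\<lambda>b. Bst xs i b * GB b k)"
      using FInvD4[OF inv iU] k True by simp
    also have "\<dots> = msum (dd i) (dd k) (Pa i \<union> {i}) (\<lambda>b. Bst xs i b * GB b k)"
    proof (rule msum_mono_neutral)
      show "finite (CC - set xs)" by simp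
      show "Pa i \<union> {i} \<subseteq> CC - set xs" using PiU iU by auto
      fix b assume b: "b \<in> CC - set xs - (Pa i \<union> {i})"
      then have "Bst xs i b = 0\<^sub>m (dd i) (dd b)" using zero_ia(1)[of b] by simp
      then show "Bst xs i b * GB b k = 0\<^sub>m (dd i) (dd k)" using GB_carrier[of b k] by simp
    qed
    finally have "Nst xs i k = msum (dd i) (dd k) (Pa i \<union> {i}) (\<lambda>b. SB i i b * GB b k)" unfolding SBi .
    then show ?thesis using e True by simp
  qed
qed


lemma cancel_lemma: fixes X S T :: "complex mat"
  assumes "X \<in> carrier_mat a c" "S \<in> carrier_mat a c" "T \<in> carrier_mat a c"
  shows "(X + S) + (- X + T) = S + T"
  by (rule eq_matI) (use assms in auto)

lemma row_upd: assumes j: "j \<in> Pa i" and b: "b \<in> (CC - set xs) - {i}"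
  shows "Bst (xs @ [i]) j b * GB b k = Bst xs j b * GB b k + transpose_mat (Ps i j) * (Bst xs i b * GB b k)"
proof -
  have jC: "j \<in> CC" and bC: "b \<in> CC" using j b anc_C by auto
  show ?thesis
  proof (cases "b \<in> Pa i")
    case True
    have "Bst (xs @ [i]) j b = Bst xs j b + transpose_mat (Ps i j) * Bst xs i b"
      unfolding Bst_snoc Bnew using True j by simp
    then have "Bst (xs @ [i]) j b * GB b k = Bst xs j b * GB b k + (transpose_mat (Ps i j) * Bst xs i b) * GB b k"
      using add_mult_distrib_mat[OF Bc[OF jC bC] mult_carrier_mat[OF TPc[OF jC] Bc[OF iC bC]] GB_carrier] by simp
    also have "(transpose_mat (Ps i j) * Bst xs i b) * GB b k = transpose_mat (Ps i j) * (Bst xs i b * GB b k)"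
      by (rule assoc_mult_mat[OF TPc[OF jC] Bc[OF iC bC] GB_carrier])
    finally show ?thesis .
  next
    case False
    have bi: "b \<noteq> i" using b by simp
    have "Bst (xs @ [i]) j b = Bst xs j b"
      unfolding Bst_snoc Bnew using False j bi anc_irrefl by auto
    moreover have "Bst xs i b = 0\<^sub>m (dd i) (dd b)" using zero_ia(1)[of b] b False by simp
    moreover have "Bst xs j b * GB b k \<in> carrier_mat (dd j) (dd k)"
      by (rule mult_carrier_mat[OF Bc[OF jC bC] GB_carrier])
    ultimately show ?thesis using TPc[OF jC] GB_carrier[of b k] by simp
  qed
qed

lemma F4n: assumes j: "j \<in> CC - set (xs @ [i])" and k: "k \<in> Pa j \<or> k = j"
  shows "Nst (xs @ [i]) j k = msum (dd j) (dd k) (CC - set (xs @ [i])) (\<lambda>b. Bst (xs @ [i]) j b * GB b k)"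
proof -
  define U' where "U' = (CC - set xs) - {i}"
  have jU: "j \<in> CC - set xs" and ji: "j \<noteq> i" and jC: "j \<in> CC" using j by auto
  have UU': "CC - set (xs @ [i]) = U'" unfolding U'_def by auto
  have fin: "finite U'" unfolding U'_def by simp
  have iU': "i \<notin> U'" unfolding U'_def by simp
  have Uins': "CC - set xs = insert i U'" unfolding U'_def using iU by auto
  have UC: "\<And>b. b \<in> U' \<Longrightarrow> b \<in> CC" unfolding U'_def by auto
  have cJ: "\<And>b. b \<in> U' \<Longrightarrow> Bst xs j b * GB b k \<in> carrier_mat (dd j) (dd k)"
    using mult_carrier_mat[OF Bc[OF jC] GB_carrier] UC by blast
  have Nj: "Nst xs j k = Bst xs j i * GB i k + msum (dd j) (dd k) U' (\<lambda>b. Bst xs j b * GB b k)"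
    using FInvD4[OF inv jU k] unfolding Uins'
    using msum_insert[where f="\<lambda>b. Bst xs j b * GB b k", OF fin iU' mult_carrier_mat[OF Bc[OF jC iC] GB_carrier]] by simp
  show ?thesis
  proof (cases "j \<in> Pa i")
    case True
    have kP: "k \<in> Pa i" using k True anc_trans by auto
    have kC: "k \<in> CC" using kP anc_C by auto
    have cI: "\<And>b. b \<in> U' \<Longrightarrow> Bst xs i b * GB b k \<in> carrier_mat (dd i) (dd k)"
      using mult_carrier_mat[OF Bc[OF iC] GB_carrier] UC by blast
    have Ni: "Nst xs i k = Bst xs i i * GB i k + msum (dd i) (dd k) U' (\<lambda>b. Bst xs i b * GB b k)"
      using FInvD4[OF inv iU, of k] kP unfolding Uins'
      using msum_insert[where f="\<lambda>b. Bst xs i b * GB b k", OF fin iU' mult_carrier_mat[OF Bii GB_carrier]] by simp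
    define S1 where "S1 = msum (dd j) (dd k) U' (\<lambda>b. Bst xs j b * GB b k)"
    define S2 where "S2 = msum (dd i) (dd k) U' (\<lambda>b. Bst xs i b * GB b k)"
    define X where "X = Bst xs j i * GB i k"
    define T where "T = transpose_mat (Ps i j)"
    have Tc: "T \<in> carrier_mat (dd j) (dd i)" unfolding T_def by (rule TPc[OF jC])
    have Xc: "X \<in> carrier_mat (dd j) (dd k)" unfolding X_def by (rule mult_carrier_mat[OF Bc[OF jC iC] GB_carrier])
    have S1c: "S1 \<in> carrier_mat (dd j) (dd k)" unfolding S1_def by simp
    have S2c: "S2 \<in> carrier_mat (dd i) (dd k)" unfolding S2_def by simp
    have BGc: "Bst xs i i * GB i k \<in> carrier_mat (dd i) (dd k)" by (rule mult_carrier_mat[OF Bii GB_carrier])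
    have "Nst (xs @ [i]) j k = Nst xs j k + T * Nst xs i k"
      unfolding Nst_snoc N_step_def T_def using True kP by simp
    also have "T * Nst xs i k = T * (Bst xs i i * GB i k) + T * S2"
      unfolding Ni S2_def[symmetric] by (rule mult_add_distrib_mat[OF Tc BGc S2c])
    also have "T * (Bst xs i i * GB i k) = (T * Bst xs i i) * GB i k"
      by (rule assoc_mult_mat[OF Tc Bii GB_carrier, symmetric])
    also have "T * Bst xs i i = - Bst xs j i" unfolding T_def by (rule K[OF jU])
    also have "- Bst xs j i * GB i k = - X" unfolding X_def
      by (rule uminus_mult_left_mat) (use Bc[OF jC iC] GB_carrier[of i k] in auto)
    also have "Nst xs j k = X + S1" unfolding Nj X_def S1_def ..
    also have "(X + S1) + (- X + T * S2) = S1 + T * S2"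
      by (rule cancel_lemma[OF Xc S1c mult_carrier_mat[OF Tc S2c]])
    also have "T * S2 = msum (dd j) (dd k) U' (\<lambda>b. T * (Bst xs i b * GB b k))"
      unfolding S2_def by (rule msum_mult_left[OF Tc cI])
    also have "S1 + msum (dd j) (dd k) U' (\<lambda>b. T * (Bst xs i b * GB b k))
       = msum (dd j) (dd k) U' (\<lambda>b. Bst xs j b * GB b k + T * (Bst xs i b * GB b k))"
      unfolding S1_def by (rule msum_add[symmetric]) (use cJ cI Tc in auto)
    also have "\<dots> = msum (dd j) (dd k) U' (\<lambda>b. Bst (xs @ [i]) j b * GB b k)"
      by (rule msum_cong) (use row_upd[OF True] in \<open>simp add: T_def U'_def\<close>)
    finally show ?thesis unfolding UU' .
  next
    case False
    have "Nst (xs @ [i]) j k = Nst xs j k"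
      unfolding Nst_snoc N_step_def using False by simp
    also have "Bst xs j i = 0\<^sub>m (dd j) (dd i)" using zero_ia(2)[OF jU ji False] .
    then have "Bst xs j i * GB i k = 0\<^sub>m (dd j) (dd k)" using GB_carrier[of i k] by simp
    then have "Nst xs j k = msum (dd j) (dd k) U' (\<lambda>b. Bst xs j b * GB b k)" unfolding Nj by simp
    also have "\<dots> = msum (dd j) (dd k) U' (\<lambda>b. Bst (xs @ [i]) j b * GB b k)"
    proof (rule msum_cong)
      fix b assume "b \<in> U'" then have "b \<noteq> i" unfolding U'_def by simp
      then show "Bst xs j b * GB b k = Bst (xs @ [i]) j b * GB b k"
        unfolding Bst_snoc Bnew using False ji by simp
    qed
    finally show ?thesis unfolding UU' .
  qed
qed

lemma FInv_step: "FInv (xs @ [i])"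
proof (rule FInvI)
  show "\<And>a b. a \<in> CC \<Longrightarrow> b \<in> CC \<Longrightarrow> Bst (xs @ [i]) a b \<in> carrier_mat (dd a) (dd b)" by (rule F1n)
  show "\<And>a b. a \<in> CC - set (xs @ [i]) \<Longrightarrow> b \<in> CC - set (xs @ [i]) \<Longrightarrow> \<not> related Pa a b \<Longrightarrow>
     Bst (xs @ [i]) a b = 0\<^sub>m (dd a) (dd b)" by (rule F2n)
  show "\<And>a b. a \<in> CC - set (xs @ [i]) \<Longrightarrow> b \<in> CC - set (xs @ [i]) \<Longrightarrow>
     transpose_mat (Bst (xs @ [i]) a b) = Bst (xs @ [i]) b a" by (rule F3n)
  show "\<And>j k. j \<in> CC - set (xs @ [i]) \<Longrightarrow> k \<in> Pa j \<or> k = j \<Longrightarrow>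
       Nst (xs @ [i]) j k = msum (dd j) (dd k) (CC - set (xs @ [i])) (\<lambda>b. Bst (xs @ [i]) j b * GB b k)"
    by (rule F4n)
  show "\<And>x. x \<in> set (xs @ [i]) \<Longrightarrow> Bst (xs @ [i]) x x = SB x x x" by (rule F5n_B)
  show "\<And>x k. x \<in> set (xs @ [i]) \<Longrightarrow> k \<in> Pa x \<or> k = x \<Longrightarrow>
       Nst (xs @ [i]) x k = msum (dd x) (dd k) (Pa x \<union> {x}) (\<lambda>b. SB x x b * GB b k)"
    by (rule F5n_N)
qed

end
end

context setting begin

lemma FInv_prefix: "ford = xs @ ys \<Longrightarrow> FInv xs"
proof (induction xs arbitrary: ys rule: rev_induct)
  case Nil show ?case by (rule FInv_base)
next
  case (snoc x xs)
  then have sp: "ford = xs @ x # ys" by simp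
  then have "FInv xs" using snoc.IH by simp
  then show ?case by (rule FInv_step[OF sp])
qed

lemma FInv_ford: "FInv ford" using FInv_prefix[of ford "[]"] by simp

lemma CC_ford: "CC - set ford = {r}"
proof -
  have "CC - (CC - {r}) = {r}" using root by blast
  then show ?thesis unfolding set_orders(1) .
qed

abbreviation "Nf \<equiv> Nst ford"
abbreviation "DD \<equiv> Dblk Pa B0 ford"
abbreviation "P0 \<equiv> P_init Pa DD Nf"

lemma DD_eq: "DD i = Bst ford i i" unfolding Dblk_def ..

lemma DD_carrier: "i \<in> CC \<Longrightarrow> DD i \<in> carrier_mat (dd i) (dd i)"
  unfolding DD_eq by (rule FInvD(1)[OF FInv_ford]) 

lemma DD_props: "i \<in> CC \<Longrightarrow> minv (DD i) \<in> carrier_mat (dd i) (dd i) \<and> minv (DD i) * DD i = 1\<^sub>m (dd i)"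
  using minv_props[OF DD_carrier D_inv[rule_format]] by auto

lemma P0_root: "P0 r r = GB r r"
proof -
  have rr: "related Pa r r" unfolding related_def by simp
  have rU: "r \<in> CC - set ford" using CC_ford by simp
  have "Nf r r = msum (dd r) (dd r) {r} (\<lambda>b. Bst ford r b * GB b r)"
    using FInvD4[OF FInv_ford rU, of r] CC_ford by simp
  also have "\<dots> = DD r * GB r r" unfolding DD_eq
    by (rule msum_single[where f="\<lambda>b. Bst ford r b * GB b r", OF mult_carrier_mat[OF FInvD(1)[OF FInv_ford root root] GB_carrier]])
  finally have "P0 r r = minv (DD r) * (DD r * GB r r)" unfolding P_init_def using rr by simp
  also have "\<dots> = (minv (DD r) * DD r) * GB r r"
    using assoc_mult_mat[OF conjunct1[OF DD_props[OF root]] DD_carrier[OF root] GB_carrier[of r r]] by simp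
  also have "\<dots> = GB r r" using DD_props[OF root] GB_carrier[of r r] by simp
  finally show ?thesis .
qed

lemma P0_eq: assumes iC: "i \<in> CC" and inr: "i \<noteq> r" and k: "k \<in> Pa i \<or> k = i"
  shows "P0 i k \<in> carrier_mat (dd i) (dd k)"
    "GB i k = P0 i k + msum (dd i) (dd k) (Pa i) (\<lambda>c. Ps i c * GB c k)"
proof -
  have "i \<in> set ford" using set_orders(1) iC inr by simp
  then obtain xs ys where sp: "ford = xs @ i # ys" using split_list[of i ford] by auto
  have inv: "FInv xs" by (rule FInv_prefix[of xs "i # ys"]) (use sp in simp)
  have ixs: "i \<in> set ford" using sp by simp
  have SBi': "SB i = Bst xs" by (rule SBi[OF sp inv])
  have DDi: "DD i = SB i i i" unfolding DD_eq using FInvD(4)[OF FInv_ford ixs] .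
  have rel: "related Pa i k" using k unfolding related_def by auto
  define D where "D = DD i"
  have Dc: "D \<in> carrier_mat (dd i) (dd i)" unfolding D_def by (rule DD_carrier[OF iC])
  have Di: "minv D \<in> carrier_mat (dd i) (dd i)" "minv D * D = 1\<^sub>m (dd i)"
    using DD_props[OF iC] unfolding D_def by auto
  have SBc: "\<And>c. c \<in> CC \<Longrightarrow> SB i i c \<in> carrier_mat (dd i) (dd c)"
    unfolding SBi' using FInvD(1)[OF inv] iC by simp
  have PaC: "\<And>c. c \<in> Pa i \<Longrightarrow> c \<in> CC" using anc_C by auto
  have fin: "finite (Pa i)" by (rule anc_finite)
  have iP: "i \<notin> Pa i" by (rule anc_irrefl)
  have Nf: "Nf i k = msum (dd i) (dd k) (Pa i \<union> {i}) (\<lambda>b. SB i i b * GB b k)"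
    by (rule FInvD6[OF FInv_ford ixs k])
  also have "\<dots> = D * GB i k + msum (dd i) (dd k) (Pa i) (\<lambda>b. SB i i b * GB b k)"
    unfolding D_def DDi using msum_insert[where f="\<lambda>b. SB i i b * GB b k", OF fin iP mult_carrier_mat[OF SBc[OF iC] GB_carrier]]
    by simp
  finally have Nf2: "Nf i k = D * GB i k + msum (dd i) (dd k) (Pa i) (\<lambda>b. SB i i b * GB b k)" .
  have P0e: "P0 i k = minv D * Nf i k" unfolding P_init_def D_def using rel by simp
  have cS: "\<And>c. c \<in> Pa i \<Longrightarrow> SB i i c * GB c k \<in> carrier_mat (dd i) (dd k)"
    using mult_carrier_mat[OF SBc GB_carrier] PaC by blast
  have cP: "\<And>c. c \<in> Pa i \<Longrightarrow> Ps i c * GB c k \<in> carrier_mat (dd i) (dd k)"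
    using mult_carrier_mat[OF Psc[OF sp inv] GB_carrier] PaC by blast
  have trm: "\<And>c. c \<in> Pa i \<Longrightarrow> minv D * (SB i i c * GB c k) = - (Ps i c * GB c k)"
  proof -
    fix c assume c: "c \<in> Pa i"
    have "minv D * (SB i i c * GB c k) = (minv D * SB i i c) * GB c k"
      by (rule assoc_mult_mat[OF Di(1) SBc[OF PaC[OF c]] GB_carrier, symmetric])
    also have "minv D * SB i i c = - Ps i c"
    proof -
      have "Ps i c = - minv D * SB i i c" unfolding Psi_def D_def DDi ..
      also have "\<dots> = - (minv D * SB i i c)"
        by (rule uminus_mult_left_mat) (use Di(1) SBc[OF PaC[OF c]] in auto)
      finally have "Ps i c = - (minv D * SB i i c)" .
      then have "- Ps i c = - (- (minv D * SB i i c))" by simp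
      also have "\<dots> = minv D * SB i i c"
        using mult_carrier_mat[OF Di(1) SBc[OF PaC[OF c]]] by simp
      finally show ?thesis by simp
    qed
    also have "- Ps i c * GB c k = - (Ps i c * GB c k)"
      by (rule uminus_mult_left_mat) (use Psc[OF sp inv PaC[OF c]] GB_carrier[of c k] in auto)
    finally show "minv D * (SB i i c * GB c k) = - (Ps i c * GB c k)" .
  qed
  define S where "S = msum (dd i) (dd k) (Pa i) (\<lambda>c. Ps i c * GB c k)"
  have Sc: "S \<in> carrier_mat (dd i) (dd k)" unfolding S_def by simp
  have "P0 i k = minv D * (D * GB i k) + minv D * msum (dd i) (dd k) (Pa i) (\<lambda>b. SB i i b * GB b k)"
    unfolding P0e Nf2 by (rule mult_add_distrib_mat[OF Di(1) mult_carrier_mat[OF Dc GB_carrier] msum_carrier])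
  also have "minv D * (D * GB i k) = GB i k"
    using assoc_mult_mat[OF Di(1) Dc GB_carrier[of i k]] Di(2) GB_carrier[of i k] by simp
  also have "minv D * msum (dd i) (dd k) (Pa i) (\<lambda>b. SB i i b * GB b k)
       = msum (dd i) (dd k) (Pa i) (\<lambda>b. minv D * (SB i i b * GB b k))"
    by (rule msum_mult_left[OF Di(1) cS])
  also have "\<dots> = msum (dd i) (dd k) (Pa i) (\<lambda>c. - (Ps i c * GB c k))"
    by (rule msum_cong) (rule trm)
  also have "\<dots> = - S" unfolding S_def by (rule msum_uminus[OF cP])
  finally have P0f: "P0 i k = GB i k + - S" .
  show "P0 i k \<in> carrier_mat (dd i) (dd k)" unfolding P0f using Sc GB_carrier[of i k] by simp
  show "GB i k = P0 i k + S" unfolding P0f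
    by (rule eq_matI) (use Sc GB_carrier[of i k] in auto)
qed

end

context setting begin

lemma Ps_carrier: assumes iC: "i \<in> CC" and inr: "i \<noteq> r" and c: "c \<in> CC"
  shows "Ps i c \<in> carrier_mat (dd i) (dd c)"
proof -
  have "i \<in> set ford" using set_orders(1) iC inr by simp
  then obtain xs ys where sp: "ford = xs @ i # ys" using split_list[of i ford] by auto
  have inv: "FInv xs" by (rule FInv_prefix[of xs "i # ys"]) (use sp in simp)
  show ?thesis by (rule Psc[OF sp inv c])
qed

abbreviation "Pst xs \<equiv> foldl (\<lambda>P i. P_step Pa (Ps i) i P) P0 xs"

definition BInv :: "nat list \<Rightarrow> bool" where
 "BInv xs \<longleftrightarrow> (\<forall>a\<in>insert r (set xs). \<forall>b. (b \<in> Pa a \<or> b = a) \<longrightarrow> Pst xs a b = GB a b \<and> Pst xs b a = GB b a)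
    \<and> (\<forall>a\<in>CC - insert r (set xs). \<forall>b. (b \<in> Pa a \<or> b = a) \<longrightarrow> Pst xs a b = P0 a b)"

lemma BInvD1: assumes "BInv xs" "a \<in> insert r (set xs)" "b \<in> Pa a \<or> b = a"
  shows "Pst xs a b = GB a b" "Pst xs b a = GB b a"
proof -
  have c: "\<forall>a\<in>insert r (set xs). \<forall>b. (b \<in> Pa a \<or> b = a) \<longrightarrow> Pst xs a b = GB a b \<and> Pst xs b a = GB b a"
    using assms(1) unfolding BInv_def by (elim conjE) assumption
  note h = mp[OF spec[OF bspec[OF c assms(2)], of b] assms(3)]
  show "Pst xs a b = GB a b" "Pst xs b a = GB b a" using h by simp_all
qed

lemma BInvD2: assumes "BInv xs" "a \<in> CC - insert r (set xs)" "b \<in> Pa a \<or> b = a"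
  shows "Pst xs a b = P0 a b"
proof -
  have c: "\<forall>a\<in>CC - insert r (set xs). \<forall>b. (b \<in> Pa a \<or> b = a) \<longrightarrow> Pst xs a b = P0 a b"
    using assms(1) unfolding BInv_def by (elim conjE) assumption
  show ?thesis using mp[OF spec[OF bspec[OF c assms(2)], of b] assms(3)] .
qed

lemma BInvI:
  assumes "\<And>a b. a \<in> insert r (set xs) \<Longrightarrow> b \<in> Pa a \<or> b = a \<Longrightarrow> Pst xs a b = GB a b \<and> Pst xs b a = GB b a"
    "\<And>a b. a \<in> CC - insert r (set xs) \<Longrightarrow> b \<in> Pa a \<or> b = a \<Longrightarrow> Pst xs a b = P0 a b"
  shows "BInv xs"
  unfolding BInv_def using assms by (intro conjI ballI allI impI) simp_all

lemma BInv_base: "BInv []"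
proof (rule BInvI)
  fix a b assume a: "a \<in> insert r (set [])" and b: "b \<in> Pa a \<or> b = a"
  then have "a = r" "b = r" using anc_root by auto
  then show "Pst [] a b = GB a b \<and> Pst [] b a = GB b a" using P0_root by simp
qed simp

context
  fixes xs i ys assumes sp: "bwd = xs @ i # ys" and inv: "BInv xs"
begin

abbreviation "anc \<equiv> sorted_list_of_set (Pa i)"
abbreviation "PP \<equiv> Pst xs"
abbreviation "P1f a b \<equiv> (if a = i \<and> b \<in> Pa i then foldl (\<lambda>acc k. acc + Ps i k * PP k b) (PP i b) anc else PP a b)"
abbreviation "P2f a b \<equiv> (if b = i \<and> a \<in> Pa i then - mat_adjoint (P1f i a) else P1f a b)"

lemma biC: "i \<in> CC" and binr: "i \<noteq> r" and bixs: "i \<notin> set xs"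
  using bwd_split(1-3)[OF sp] by auto

lemma iT: "i \<notin> insert r (set xs)" using binr bixs by simp

lemma PiT: "Pa i \<subseteq> insert r (set xs)"
  using bwd_split(4)[OF sp biC] by simp

lemma xsC: "x \<in> set xs \<Longrightarrow> x \<in> CC"
proof -
  assume "x \<in> set xs" then have "x \<in> set bwd" using sp by simp
  then show "x \<in> CC" using set_orders(2) by simp
qed

lemma Tup: "a \<in> insert r (set xs) \<Longrightarrow> Pa a \<subseteq> insert r (set xs)"
proof -
  assume a: "a \<in> insert r (set xs)"
  show "Pa a \<subseteq> insert r (set xs)"
  proof (cases "a = r")
    case True then show ?thesis using anc_root by simp
  next
    case False
    then have ax: "a \<in> set xs" using a by simp
    show ?thesis using bwd_split(4)[OF sp xsC[OF ax] bwd_split(5)[OF sp ax]] by auto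
  qed
qed

lemma Pst_snoc: "Pst (xs @ [i]) = P_step Pa (Ps i) i PP" by simp

lemma Q_eq: "P_step Pa (Ps i) i PP = (\<lambda>a b. if a = i \<and> b = i then foldl (\<lambda>acc j. acc + Ps i j * P2f j i) (P2f i i) anc else P2f a b)"
  unfolding P_step_def Let_def ..

lemma set_anc: "set anc = Pa i" and dist_anc: "distinct anc"
  using anc_finite by auto

lemma PkbG: assumes k: "k \<in> Pa i" and b: "b \<in> Pa i" shows "PP k b = GB k b"
proof -
  have kT: "k \<in> insert r (set xs)" and bT: "b \<in> insert r (set xs)" using PiT k b by auto
  have "related Pa k b" by (rule anc_chain[OF k b])
  then consider "k = b" | "k \<in> Pa b" | "b \<in> Pa k" unfolding related_def by auto
  then show ?thesis
  proof cases
    case 1 then show ?thesis using BInvD1(1)[OF inv kT] by simp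
  next
    case 2 then show ?thesis using BInvD1(2)[OF inv bT] by simp
  next
    case 3 then show ?thesis using BInvD1(1)[OF inv kT] by simp
  qed
qed

lemma iCT: "i \<in> CC - insert r (set xs)" using biC iT by simp

lemma V1: assumes b: "b \<in> Pa i" shows "P1f i b = GB i b"
proof -
  have bC: "b \<in> CC" using b anc_C by auto
  have Pib: "PP i b = P0 i b" using BInvD2[OF inv iCT] b by simp
  have P0c: "P0 i b \<in> carrier_mat (dd i) (dd b)" using P0_eq(1)[OF biC binr] b by simp
  have cK: "\<And>k. k \<in> set anc \<Longrightarrow> Ps i k * PP k b \<in> carrier_mat (dd i) (dd b)"
  proof -
    fix k assume "k \<in> set anc" then have k: "k \<in> Pa i" using set_anc by simp
    then have kC: "k \<in> CC" using anc_C by auto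
    show "Ps i k * PP k b \<in> carrier_mat (dd i) (dd b)" unfolding PkbG[OF k b]
      by (rule mult_carrier_mat[OF Ps_carrier[OF biC binr kC] GB_carrier])
  qed
  have "P1f i b = foldl (\<lambda>acc k. acc + Ps i k * PP k b) (PP i b) anc" using b by simp
  also have "\<dots> = PP i b + msum (dd i) (dd b) (set anc) (\<lambda>k. Ps i k * PP k b)"
    by (rule foldl_msum[OF dist_anc _ cK]) (use Pib P0c in simp)
  also have "msum (dd i) (dd b) (set anc) (\<lambda>k. Ps i k * PP k b) = msum (dd i) (dd b) (Pa i) (\<lambda>k. Ps i k * GB k b)"
    unfolding set_anc by (rule msum_cong) (simp add: PkbG[OF _ b])
  also have "PP i b + \<dots> = GB i b" unfolding Pib using P0_eq(2)[OF biC binr, of b] b by simp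
  finally show ?thesis .
qed

lemma V2: assumes a: "a \<in> Pa i" shows "P2f a i = GB a i"
proof -
  have "P2f a i = - mat_adjoint (P1f i a)" using a anc_irrefl by auto
  also have "\<dots> = - mat_adjoint (GB i a)" unfolding V1[OF a] ..
  also have "\<dots> = GB a i" using GB_skew[of a i] by simp
  finally show ?thesis .
qed

lemma V3: "P_step Pa (Ps i) i PP i i = GB i i"
proof -
  have iP: "i \<notin> Pa i" by (rule anc_irrefl)
  have Pii: "PP i i = P0 i i" using BInvD2[OF inv iCT] by simp
  have P0c: "P0 i i \<in> carrier_mat (dd i) (dd i)" using P0_eq(1)[OF biC binr] by simp
  have e2: "P2f i i = P0 i i" using iP Pii by simp
  have cK: "\<And>j. j \<in> set anc \<Longrightarrow> Ps i j * P2f j i \<in> carrier_mat (dd i) (dd i)"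
  proof -
    fix j assume "j \<in> set anc" then have j: "j \<in> Pa i" using set_anc by simp
    then have jC: "j \<in> CC" using anc_C by auto
    show "Ps i j * P2f j i \<in> carrier_mat (dd i) (dd i)" unfolding V2[OF j]
      by (rule mult_carrier_mat[OF Ps_carrier[OF biC binr jC] GB_carrier])
  qed
  have "P_step Pa (Ps i) i PP i i = foldl (\<lambda>acc j. acc + Ps i j * P2f j i) (P2f i i) anc"
    unfolding Q_eq by simp
  also have "\<dots> = P2f i i + msum (dd i) (dd i) (set anc) (\<lambda>j. Ps i j * P2f j i)"
    by (rule foldl_msum[OF dist_anc _ cK]) (use e2 P0c in simp)
  also have "msum (dd i) (dd i) (set anc) (\<lambda>j. Ps i j * P2f j i) = msum (dd i) (dd i) (Pa i) (\<lambda>j. Ps i j * GB j i)"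
    unfolding set_anc
  proof (rule msum_cong)
    fix j assume j: "j \<in> Pa i"
    show "Ps i j * P2f j i = Ps i j * GB j i" by (subst V2[OF j]) (rule refl)
  qed
  also have "P2f i i + \<dots> = GB i i" unfolding e2 using P0_eq(2)[OF biC binr, of i] by simp
  finally show ?thesis .
qed

lemma Qa: "a \<noteq> i \<Longrightarrow> \<not> (b = i \<and> a \<in> Pa i) \<Longrightarrow> P_step Pa (Ps i) i PP a b = PP a b"
  unfolding Q_eq by auto

lemma Qb: "b \<in> Pa i \<Longrightarrow> P_step Pa (Ps i) i PP i b = GB i b"
proof -
  assume b: "b \<in> Pa i"
  then have "b \<noteq> i" using anc_irrefl by auto
  then have "P_step Pa (Ps i) i PP i b = P1f i b" unfolding Q_eq by simp
  then show ?thesis using V1[OF b] by simp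
qed

lemma Qc: "a \<in> Pa i \<Longrightarrow> P_step Pa (Ps i) i PP a i = GB a i"
proof -
  assume a: "a \<in> Pa i"
  then have "a \<noteq> i" using anc_irrefl by auto
  then have "P_step Pa (Ps i) i PP a i = P2f a i" unfolding Q_eq by simp
  then show ?thesis using V2[OF a] by simp
qed

lemma BInv_step: "BInv (xs @ [i])"
proof (rule BInvI)
  fix a b assume a: "a \<in> insert r (set (xs @ [i]))" and b: "b \<in> Pa a \<or> b = a"
  show "Pst (xs @ [i]) a b = GB a b \<and> Pst (xs @ [i]) b a = GB b a"
  proof (cases "a = i")
    case True
    then show ?thesis unfolding Pst_snoc using b Qb Qc V3 by auto
  next
    case False
    then have aT: "a \<in> insert r (set xs)" using a by simp
    then have bT: "b \<in> insert r (set xs)" using Tup b by auto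
    then have bi: "b \<noteq> i" using iT by auto
    have "P_step Pa (Ps i) i PP a b = PP a b" using Qa False bi by simp
    moreover have "P_step Pa (Ps i) i PP b a = PP b a" using Qa False bi by simp
    ultimately show ?thesis unfolding Pst_snoc using BInvD1[OF inv aT b] by simp
  qed
next
  fix a b assume a: "a \<in> CC - insert r (set (xs @ [i]))" and b: "b \<in> Pa a \<or> b = a"
  have ai: "a \<noteq> i" using a by simp
  have aP: "a \<notin> Pa i" using PiT a by auto
  have aT: "a \<in> CC - insert r (set xs)" using a by simp
  have "Pst (xs @ [i]) a b = PP a b" unfolding Pst_snoc using Qa ai aP by simp
  also have "\<dots> = P0 a b" by (rule BInvD2[OF inv aT b])
  finally show "Pst (xs @ [i]) a b = P0 a b" .
qed

end

lemma BInv_prefix: "bwd = xs @ ys \<Longrightarrow> BInv xs"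
proof (induction xs arbitrary: ys rule: rev_induct)
  case Nil show ?case by (rule BInv_base)
next
  case (snoc x xs)
  then have sp: "bwd = xs @ x # ys" by simp
  then have "BInv xs" using snoc.IH by simp
  then show ?case by (rule BInv_step[OF sp])
qed

lemma BInv_bwd: "BInv bwd" using BInv_prefix[of bwd "[]"] by simp

lemma final: assumes i: "i \<in> CC" and j: "j \<in> Pa i \<union> {i}"
  shows "Pst bwd i j = GB i j \<and> Pst bwd j i = GB j i"
proof -
  have "i \<in> insert r (set bwd)" using i set_orders(2) by auto
  then show ?thesis using BInvD1[OF BInv_bwd, of i j] j by auto
qed

lemma selinv_eq: "selinv cl n par r M lev lam A Sig = Pst bwd"
  unfolding selinv_def Let_def ..

end

theorem mainTheorem3:
  fixes n M lam r :: nat and cl par lev :: "nat \<Rightarrow> nat" and A Sig :: "complex mat"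
  defines "Pa \<equiv> ancestors par r M"
  defines "ford \<equiv> fwd_order lev lam M"
  assumes A: "A \<in> carrier_mat n n" and A_inv: "invertible_mat A"
    and A_sym: "transpose_mat A = A"
    and cl: "\<forall>k<n. cl k \<in> {1..M}"
    and root: "r \<in> {1..M}" and par: "\<forall>i\<in>{1..M}. i \<noteq> r \<longrightarrow> par i \<in> {1..M}"
    and lev_range: "\<forall>i\<in>{1..M}. lev i \<in> {1..lam}"
    and lev_mono: "\<forall>i\<in>{1..M}. \<forall>j\<in>Pa i. lev i < lev j"
    and lev_root: "\<forall>i\<in>{1..M}. lev i = lam \<longleftrightarrow> i = r"
    and sparse: "\<forall>i\<in>{1..M}. \<forall>j\<in>{1..M}. \<not> related Pa i j \<longrightarrow>
                   blk cl n A i j = 0\<^sub>m (card (cluster cl n i)) (card (cluster cl n j))"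
    and Sig: "Sig \<in> carrier_mat n n"
    and Sig_diag: "\<forall>i\<in>{1..M}. \<forall>j\<in>{1..M}. i \<noteq> j \<longrightarrow>
                   blk cl n Sig i j = 0\<^sub>m (card (cluster cl n i)) (card (cluster cl n j))"
    and Sig_skew: "mat_adjoint Sig = - Sig"
    and piv_inv: "\<forall>i\<in>set ford. invertible_mat (state_before Pa (blk cl n A) ford i i i)"
    and D_inv: "\<forall>i\<in>{1..M}. invertible_mat (Dblk Pa (blk cl n A) ford i)"
  shows "\<forall>i\<in>{1..M}. \<forall>j\<in>Pa i \<union> {i}.
           selinv cl n par r M lev lam A Sig i j
             = blk cl n (minv A * Sig * mat_adjoint (minv A)) i j
         \<and> selinv cl n par r M lev lam A Sig j i
             = blk cl n (minv A * Sig * mat_adjoint (minv A)) j i"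
proof -
  note defs = Pa_def ford_def
  interpret setting M lam r par lev n cl A Sig
  proof (unfold_locales)
    show "r \<in> {1..M}" by (rule root)
    show "\<forall>i\<in>{1..M}. i \<noteq> r \<longrightarrow> par i \<in> {1..M}" by (rule par)
    show "\<forall>i\<in>{1..M}. lev i \<in> {1..lam}" by (rule lev_range)
    show "\<forall>i\<in>{1..M}. \<forall>j\<in>ancestors par r M i. lev i < lev j" using lev_mono unfolding defs .
    show "\<forall>i\<in>{1..M}. lev i = lam \<longleftrightarrow> i = r" by (rule lev_root)
    show "A \<in> carrier_mat n n" by (rule A)
    show "invertible_mat A" by (rule A_inv)
    show "transpose_mat A = A" by (rule A_sym)
    show "\<forall>k<n. cl k \<in> {1..M}" by (rule cl)
    show "\<forall>i\<in>{1..M}. \<forall>j\<in>{1..M}. \<not> related (ancestors par r M) i j \<longrightarrow>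
                   blk cl n A i j = 0\<^sub>m (card (cluster cl n i)) (card (cluster cl n j))"
      using sparse unfolding defs .
    show "Sig \<in> carrier_mat n n" by (rule Sig)
    show "\<forall>i\<in>{1..M}. \<forall>j\<in>{1..M}. i \<noteq> j \<longrightarrow>
                   blk cl n Sig i j = 0\<^sub>m (card (cluster cl n i)) (card (cluster cl n j))" by (rule Sig_diag)
    show "mat_adjoint Sig = - Sig" by (rule Sig_skew)
    show "\<forall>i\<in>set (fwd_order lev lam M). invertible_mat (state_before (ancestors par r M) (blk cl n A) (fwd_order lev lam M) i i i)"
      using piv_inv unfolding defs .
    show "\<forall>i\<in>{1..M}. invertible_mat (Dblk (ancestors par r M) (blk cl n A) (fwd_order lev lam M) i)"
      using D_inv unfolding defs .
  qed
  show ?thesis unfolding Pa_def selinv_eq using final by blast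
qed

end
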